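(* Let $H$ be a connected block graph with at least one edge, and define a vertex set $R\subseteq V(H)$ as follows. (1) If $H$ is a clique or a star, $R=V(H)$. (2) Otherwise, if $H$ has a leaf block $Q$ with $|V(Q)|\ge 3$, $R=V(Q)$. (3) Otherwise, $H$ is pointed; let $Q$ be a near-leaf block of $H$, and let $v$ be the anchor of $Q$ if it exists and otherwise any cut-vertex of $Q$. (3a) If $Q$ contains exactly two cut-vertices, let $u$ be the other one and $R=V(Q_u)$. (3b) Otherwise let $u,w$ be distinct cut-vertices in $V(Q)\setminus\{v\}$, and let $S^u,S^w$ be the sets of degree-one vertices adjacent to $u$, respectively $w$; set $R=V(Q_{u,w})\setminus\{v\}$ if $Q$ contains exactly three cut-vertices, and $R=S^u\cup S^w\cup\{u,w\}$ otherwise. Then $\operatorname{cobox}(H\setminus R)\le \operatorname{cobox}(H)-1$, where $H\setminus R$ is the subgraph induced on $V(H)\setminus R$.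
   Context: All graphs are finite and simple; big ants and neighbourhoods are taken in $H$. A block is a maximal connected subgraph with no cut-vertex of its own; a block graph is one whose blocks are all complete. A cut-vertex is a vertex whose removal increases the number of connected components. A block is a leaf block if it contains exactly one cut-vertex, an internal block if it contains at least two, and an edge block if it has exactly two vertices; two distinct blocks are neighbours if they share a vertex. A graph is pointed if all its leaf blocks are edge blocks. An internal block $Q$ is a near-leaf block if either all neighbours of $Q$ are leaf blocks, or all internal block neighbours of $Q$ share with $Q$ one and the same cut-vertex, called the anchor of $Q$. For a clique $Q$ and $u,v\in V(Q)$, the big ant is $Q_{u,v}=\big(V(Q)\cup N_H(u)\cup N_H(v),\ E(Q)\cup\delta_H(u)\cup\delta_H(v)\big)$, $Q_u=Q_{u,u}$, where $N_H(x)$ and $\delta_H(x)$ are the neighbourhood and incident edge set of $x$. The co-boxicity $\operatorname{cobox}(G)$ is the boxicity of the complement of $G$; equivalently, the minimum number of co-interval subgraphs of $G$ whose edge sets cover $E(G)$ (so it is $0$ for edgeless graphs), where a graph is co-interval if its vertices can be assigned closed real intervals such that two vertices are adjacent iff their intervals are disjoint. *)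

theory Defs
  imports Complex_Main
begin

text \<open>A graph is given by a finite vertex set V and an adjacency relation E;
  all notions below are relative to V (E is only consulted between vertices of V),
  so an induced subgraph on W \<subseteq> V is simply (W, E).\<close>

definition sgraph :: "'a set \<Rightarrow> ('a \<Rightarrow> 'a \<Rightarrow> bool) \<Rightarrow> bool" where
  "sgraph V E \<longleftrightarrow> finite V \<and> (\<forall>x y. E x y \<longrightarrow> E y x) \<and> (\<forall>x. \<not> E x x)
     \<and> (\<forall>x y. E x y \<longrightarrow> x \<in> V \<and> y \<in> V)"

definition adj_in :: "'a set \<Rightarrow> ('a \<Rightarrow> 'a \<Rightarrow> bool) \<Rightarrow> 'a \<Rightarrow> 'a \<Rightarrow> bool" where
  "adj_in V E x y \<longleftrightarrow> x \<in> V \<and> y \<in> V \<and> E x y"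

definition edges :: "'a set \<Rightarrow> ('a \<Rightarrow> 'a \<Rightarrow> bool) \<Rightarrow> 'a set set" where
  "edges V E = {{x, y} | x y. adj_in V E x y}"

definition nbhd :: "'a set \<Rightarrow> ('a \<Rightarrow> 'a \<Rightarrow> bool) \<Rightarrow> 'a \<Rightarrow> 'a set" where
  "nbhd V E u = {x \<in> V. adj_in V E u x}"

definition degree :: "'a set \<Rightarrow> ('a \<Rightarrow> 'a \<Rightarrow> bool) \<Rightarrow> 'a \<Rightarrow> nat" where
  "degree V E u = card (nbhd V E u)"

definition graph_connected :: "'a set \<Rightarrow> ('a \<Rightarrow> 'a \<Rightarrow> bool) \<Rightarrow> bool" where
  "graph_connected V E \<longleftrightarrow> V \<noteq> {} \<and> (\<forall>x\<in>V. \<forall>y\<in>V. (adj_in V E)\<^sup>*\<^sup>* x y)"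

definition ncomp :: "'a set \<Rightarrow> ('a \<Rightarrow> 'a \<Rightarrow> bool) \<Rightarrow> nat" where
  "ncomp V E = card ((\<lambda>x. {y \<in> V. (adj_in V E)\<^sup>*\<^sup>* x y}) ` V)"

definition cut_vertex :: "'a set \<Rightarrow> ('a \<Rightarrow> 'a \<Rightarrow> bool) \<Rightarrow> 'a \<Rightarrow> bool" where
  "cut_vertex V E v \<longleftrightarrow> v \<in> V \<and> ncomp (V - {v}) E > ncomp V E"

definition no_cut_vertex :: "'a set \<Rightarrow> ('a \<Rightarrow> 'a \<Rightarrow> bool) \<Rightarrow> bool" where
  "no_cut_vertex B E \<longleftrightarrow> (\<forall>x\<in>B. \<not> cut_vertex B E x)"

text \<open>Blocks, represented by their vertex sets (a maximal subgraph with the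
  property is necessarily induced).\<close>
definition is_block :: "'a set \<Rightarrow> ('a \<Rightarrow> 'a \<Rightarrow> bool) \<Rightarrow> 'a set \<Rightarrow> bool" where
  "is_block V E B \<longleftrightarrow> B \<subseteq> V \<and> graph_connected B E \<and> no_cut_vertex B E \<and>
     (\<forall>B'. B \<subseteq> B' \<and> B' \<subseteq> V \<and> graph_connected B' E \<and> no_cut_vertex B' E \<longrightarrow> B' = B)"

definition is_clique :: "'a set \<Rightarrow> ('a \<Rightarrow> 'a \<Rightarrow> bool) \<Rightarrow> bool" where
  "is_clique V E \<longleftrightarrow> (\<forall>x\<in>V. \<forall>y\<in>V. x \<noteq> y \<longrightarrow> E x y)"

definition is_star :: "'a set \<Rightarrow> ('a \<Rightarrow> 'a \<Rightarrow> bool) \<Rightarrow> bool" where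
  "is_star V E \<longleftrightarrow> (\<exists>c\<in>V. \<forall>x\<in>V. x \<noteq> c \<longrightarrow> E c x \<and> (\<forall>y\<in>V. E x y \<longrightarrow> y = c))"

definition block_graph :: "'a set \<Rightarrow> ('a \<Rightarrow> 'a \<Rightarrow> bool) \<Rightarrow> bool" where
  "block_graph V E \<longleftrightarrow> (\<forall>B. is_block V E B \<longrightarrow> is_clique B E)"

definition cutvs_in :: "'a set \<Rightarrow> ('a \<Rightarrow> 'a \<Rightarrow> bool) \<Rightarrow> 'a set \<Rightarrow> 'a set" where
  "cutvs_in V E Q = {c \<in> Q. cut_vertex V E c}"

definition leaf_block :: "'a set \<Rightarrow> ('a \<Rightarrow> 'a \<Rightarrow> bool) \<Rightarrow> 'a set \<Rightarrow> bool" where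
  "leaf_block V E Q \<longleftrightarrow> is_block V E Q \<and> card (cutvs_in V E Q) = 1"

definition internal_block :: "'a set \<Rightarrow> ('a \<Rightarrow> 'a \<Rightarrow> bool) \<Rightarrow> 'a set \<Rightarrow> bool" where
  "internal_block V E Q \<longleftrightarrow> is_block V E Q \<and> card (cutvs_in V E Q) \<ge> 2"

definition edge_block :: "'a set \<Rightarrow> ('a \<Rightarrow> 'a \<Rightarrow> bool) \<Rightarrow> 'a set \<Rightarrow> bool" where
  "edge_block V E Q \<longleftrightarrow> is_block V E Q \<and> card Q = 2"

definition block_neighbours :: "'a set \<Rightarrow> ('a \<Rightarrow> 'a \<Rightarrow> bool) \<Rightarrow> 'a set \<Rightarrow> 'a set \<Rightarrow> bool" where
  "block_neighbours V E Q B \<longleftrightarrow> is_block V E Q \<and> is_block V E B \<and> Q \<noteq> B \<and> Q \<inter> B \<noteq> {}"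

definition pointed :: "'a set \<Rightarrow> ('a \<Rightarrow> 'a \<Rightarrow> bool) \<Rightarrow> bool" where
  "pointed V E \<longleftrightarrow> (\<forall>Q. leaf_block V E Q \<longrightarrow> edge_block V E Q)"

definition near_leaf_block :: "'a set \<Rightarrow> ('a \<Rightarrow> 'a \<Rightarrow> bool) \<Rightarrow> 'a set \<Rightarrow> bool" where
  "near_leaf_block V E Q \<longleftrightarrow> internal_block V E Q \<and>
     ((\<forall>B. block_neighbours V E Q B \<longrightarrow> leaf_block V E B) \<or>
      (\<exists>c. \<forall>B. block_neighbours V E Q B \<and> internal_block V E B \<longrightarrow> B \<inter> Q = {c}))"

definition anchor :: "'a set \<Rightarrow> ('a \<Rightarrow> 'a \<Rightarrow> bool) \<Rightarrow> 'a set \<Rightarrow> 'a \<Rightarrow> bool" where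
  "anchor V E Q c \<longleftrightarrow> near_leaf_block V E Q \<and>
     (\<exists>B. block_neighbours V E Q B \<and> internal_block V E B) \<and>
     (\<forall>B. block_neighbours V E Q B \<and> internal_block V E B \<longrightarrow> B \<inter> Q = {c})"

definition big_ant_vertices ::
  "'a set \<Rightarrow> ('a \<Rightarrow> 'a \<Rightarrow> bool) \<Rightarrow> 'a set \<Rightarrow> 'a \<Rightarrow> 'a \<Rightarrow> 'a set" where
  "big_ant_vertices V E Q u v = Q \<union> nbhd V E u \<union> nbhd V E v"

definition pendant_nbrs :: "'a set \<Rightarrow> ('a \<Rightarrow> 'a \<Rightarrow> bool) \<Rightarrow> 'a \<Rightarrow> 'a set" where
  "pendant_nbrs V E u = {x \<in> nbhd V E u. degree V E x = 1}"

definition cointerval :: "'a set \<Rightarrow> ('a \<Rightarrow> 'a \<Rightarrow> bool) \<Rightarrow> bool" where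
  "cointerval V E \<longleftrightarrow> (\<exists>l r :: 'a \<Rightarrow> real. (\<forall>x\<in>V. l x \<le> r x) \<and>
     (\<forall>x\<in>V. \<forall>y\<in>V. x \<noteq> y \<longrightarrow> (E x y \<longleftrightarrow> r x < l y \<or> r y < l x)))"

definition cobox :: "'a set \<Rightarrow> ('a \<Rightarrow> 'a \<Rightarrow> bool) \<Rightarrow> nat" where
  "cobox V E = (LEAST k. \<exists>(Vs :: nat \<Rightarrow> 'a set) (Es :: nat \<Rightarrow> 'a \<Rightarrow> 'a \<Rightarrow> bool).
      (\<forall>i<k. Vs i \<subseteq> V \<and> (\<forall>x\<in>Vs i. \<forall>y\<in>Vs i. Es i x y \<longrightarrow> E x y) \<and> cointerval (Vs i) (Es i))
      \<and> edges V E \<subseteq> (\<Union>i<k. edges (Vs i) (Es i)))"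

definition admissible_R :: "'a set \<Rightarrow> ('a \<Rightarrow> 'a \<Rightarrow> bool) \<Rightarrow> 'a set \<Rightarrow> bool" where
  "admissible_R V E R \<longleftrightarrow>
    (if is_clique V E \<or> is_star V E then R = V
     else if (\<exists>Q. leaf_block V E Q \<and> card Q \<ge> 3)
     then (\<exists>Q. leaf_block V E Q \<and> card Q \<ge> 3 \<and> R = Q)
     else (\<exists>Q v. near_leaf_block V E Q \<and>
            (if (\<exists>c. anchor V E Q c) then anchor V E Q v
             else v \<in> cutvs_in V E Q) \<and>
            (if card (cutvs_in V E Q) = 2
             then (\<exists>u. u \<in> cutvs_in V E Q \<and> u \<noteq> v \<and> R = big_ant_vertices V E Q u u)
             else (\<exists>u w. u \<noteq> w \<and> u \<in> cutvs_in V E Q - {v} \<and> w \<in> cutvs_in V E Q - {v} \<and>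
                     R = (if card (cutvs_in V E Q) = 3
                          then big_ant_vertices V E Q u w - {v}
                          else pendant_nbrs V E u \<union> pendant_nbrs V E w \<union> {u, w})))))"

end

theory Submission
  imports Defs
begin


definition valid :: "'a set \<Rightarrow> ('a \<Rightarrow> 'a \<Rightarrow> bool) \<Rightarrow> nat \<Rightarrow> (nat \<Rightarrow> 'a set) \<Rightarrow> (nat \<Rightarrow> 'a \<Rightarrow> 'a \<Rightarrow> bool) \<Rightarrow> bool" where
 "valid V E k Vs Es \<longleftrightarrow> (\<forall>i<k. Vs i \<subseteq> V \<and> (\<forall>x\<in>Vs i. \<forall>y\<in>Vs i. Es i x y \<longrightarrow> E x y) \<and> cointerval (Vs i) (Es i))
      \<and> edges V E \<subseteq> (\<Union>i<k. edges (Vs i) (Es i))"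

lemma cobox_le: "valid V E k Vs Es \<Longrightarrow> cobox V E \<le> k"
  unfolding cobox_def valid_def by (rule Least_le) blast

lemma edges_finite: "finite V \<Longrightarrow> finite (edges V E)"
proof -
  assume f: "finite V"
  have "edges V E \<subseteq> (\<lambda>(x,y). {x,y}) ` (V \<times> V)"
    unfolding edges_def adj_in_def by auto
  thus ?thesis using f by (meson finite_SigmaI finite_imageI finite_subset)
qed

lemma cover_exists:
  assumes "sgraph V E" shows "\<exists>k Vs Es. valid V E k Vs Es"
proof -
  have fin: "finite (edges V E)" using assms edges_finite sgraph_def by blast
  define n where "n = card (edges V E)"
  obtain f where fb: "bij_betw f {0..<n} (edges V E)"
    using ex_bij_betw_nat_finite[OF fin] unfolding n_def by blast
  define Vs where "Vs i = f i" for i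
  define Es where "Es i x y = (x \<noteq> y \<and> x \<in> f i \<and> y \<in> f i)" for i x y
  have fi: "i < n \<Longrightarrow> f i \<in> edges V E" for i using fb bij_betw_apply by fastforce
  have "valid V E n Vs Es"
    unfolding valid_def
  proof (intro conjI allI impI)
    fix i assume i: "i < n"
    obtain a b where ab: "f i = {a,b}" "adj_in V E a b" using fi[OF i] unfolding edges_def by blast
    have ne: "a \<noteq> b" using ab assms unfolding adj_in_def sgraph_def by blast
    show "Vs i \<subseteq> V" using ab unfolding Vs_def adj_in_def by auto
    have sym: "E b a" using ab assms unfolding adj_in_def sgraph_def by blast
    show "\<forall>x\<in>Vs i. \<forall>y\<in>Vs i. Es i x y \<longrightarrow> E x y"
      using ab(1) sym ab(2) unfolding Vs_def Es_def adj_in_def by auto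
    show "cointerval (Vs i) (Es i)"
      unfolding cointerval_def
      apply (rule exI[of _ "\<lambda>x. if x = a then 0 else 1"], rule exI[of _ "\<lambda>x. if x = a then 0 else 1"])
      using ab ne unfolding Vs_def Es_def by auto
  next
    show "edges V E \<subseteq> (\<Union>i<n. edges (Vs i) (Es i))"
    proof
      fix e assume e: "e \<in> edges V E"
      have "e \<in> f ` {0..<n}" using fb e unfolding bij_betw_def by blast
      then obtain i where i: "i < n" "f i = e" by auto
      obtain a b where ab: "e = {a,b}" "adj_in V E a b" using e unfolding edges_def by blast
      have ne: "a \<noteq> b" using ab assms unfolding adj_in_def sgraph_def by blast
      have "e \<in> edges (Vs i) (Es i)" unfolding edges_def adj_in_def Vs_def Es_def
        using ab ne i by auto
      thus "e \<in> (\<Union>i<n. edges (Vs i) (Es i))" using i by auto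
    qed
  qed
  thus ?thesis by blast
qed

lemma cobox_alt: "cobox V E = (LEAST k. \<exists>Vs Es. valid V E k Vs Es)"
  unfolding cobox_def valid_def by simp

lemma cobox_cover: "sgraph V E \<Longrightarrow> \<exists>Vs Es. valid V E (cobox V E) Vs Es"
proof -
  assume "sgraph V E"
  then obtain k Vs Es where "valid V E k Vs Es" using cover_exists by blast
  then have "\<exists>k. \<exists>Vs Es. valid V E k Vs Es" by blast
  then show ?thesis unfolding cobox_alt by (rule LeastI_ex)
qed

lemma cobox_pos: "sgraph V E \<Longrightarrow> edges V E \<noteq> {} \<Longrightarrow> cobox V E \<ge> 1"
proof (rule ccontr)
  assume a: "sgraph V E" "edges V E \<noteq> {}" "\<not> cobox V E \<ge> 1"
  have "cobox V E = 0" using a(3) by simp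
  then obtain Vs Es where "valid V E 0 Vs Es" using cobox_cover[OF a(1)] by metis
  then show False using a(2) unfolding valid_def by auto
qed

lemma cobox_empty: "edges V E = {} \<Longrightarrow> cobox V E = 0"
  using cobox_le[of V E 0] unfolding valid_def by auto

lemma cointerval_restrict: "cointerval W F \<Longrightarrow> cointerval (W \<inter> U) F"
  unfolding cointerval_def by blast

lemma cointerval_sym: "cointerval W F \<Longrightarrow> x \<in> W \<Longrightarrow> y \<in> W \<Longrightarrow> F x y \<Longrightarrow> x \<noteq> y \<Longrightarrow> F y x"
  unfolding cointerval_def by metis

definition skip :: "nat \<Rightarrow> nat \<Rightarrow> nat" where "skip i l = (if l < i then l else Suc l)"

lemma skip_inv: "j \<noteq> i \<Longrightarrow> j < k \<Longrightarrow> i < k \<Longrightarrow> \<exists>l < k - 1. skip i l = j"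
proof (cases "j < i")
  case True
  assume "j < k" "i < k" thus ?thesis using True by (intro exI[of _ j]) (auto simp: skip_def)
next
  case False
  assume "j \<noteq> i" "j < k" "i < k" thus ?thesis using False by (intro exI[of _ "j - 1"]) (auto simp: skip_def)
qed

lemma skip_props: "i < k \<Longrightarrow> l < k - 1 \<Longrightarrow> skip i l < k \<and> skip i l \<noteq> i"
  unfolding skip_def by auto

lemma edge_in: "e \<in> edges W F \<Longrightarrow> \<exists>x y. e = {x,y} \<and> x \<in> W \<and> y \<in> W \<and> F x y"
  unfolding edges_def adj_in_def by blast

lemma edge_intro: "x \<in> W \<Longrightarrow> y \<in> W \<Longrightarrow> F x y \<Longrightarrow> {x,y} \<in> edges W F"
  unfolding edges_def adj_in_def by blast

lemma replace_cover:
  assumes v: "valid V E k Vs Es" and VV: "V' \<subseteq> V" and i: "i < k" and m: "m < k" "m \<noteq> i"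
    and D: "Dv \<subseteq> V'" "\<forall>x\<in>Dv. \<forall>y\<in>Dv. De x y \<longrightarrow> E x y" "cointerval Dv De"
    and cov: "\<forall>e\<in>edges V' E. e \<in> edges (Vs i) (Es i) \<union> edges (Vs m) (Es m) \<longrightarrow> e \<in> edges Dv De"
  shows "cobox V' E \<le> k - 1"
proof -
  define Vs' where "Vs' l = (if skip i l = m then Dv else Vs (skip i l) \<inter> V')" for l
  define Es' where "Es' l = (if skip i l = m then De else Es (skip i l))" for l
  have "valid V' E (k - 1) Vs' Es'"
    unfolding valid_def
  proof (intro conjI allI impI)
    fix l assume l: "l < k - 1"
    have s: "skip i l < k" using skip_props[OF i l] by blast
    show "Vs' l \<subseteq> V'" using D unfolding Vs'_def by auto
    show "\<forall>x\<in>Vs' l. \<forall>y\<in>Vs' l. Es' l x y \<longrightarrow> E x y"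
      using D v s unfolding Vs'_def Es'_def valid_def by auto
    have "cointerval (Vs (skip i l)) (Es (skip i l))" using v s unfolding valid_def by blast
    then show "cointerval (Vs' l) (Es' l)"
      using D cointerval_restrict unfolding Vs'_def Es'_def by auto
  next
    show "edges V' E \<subseteq> (\<Union>l<k - 1. edges (Vs' l) (Es' l))"
    proof
      fix e assume e: "e \<in> edges V' E"
      have "e \<in> edges V E" using e VV unfolding edges_def adj_in_def by blast
      then obtain j where j: "j < k" "e \<in> edges (Vs j) (Es j)" using v unfolding valid_def by blast
      show "e \<in> (\<Union>l<k - 1. edges (Vs' l) (Es' l))"
      proof (cases "j = i \<or> j = m")
        case True
        then have eD: "e \<in> edges Dv De" using cov e j by blast
        obtain l where l: "l < k - 1" "skip i l = m" using skip_inv[OF m(2) m(1) i] by blast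
        have "e \<in> edges (Vs' l) (Es' l)" using eD l unfolding Vs'_def Es'_def by simp
        thus ?thesis using l by blast
      next
        case False
        obtain l where l: "l < k - 1" "skip i l = j" using skip_inv[of j i k] False j i by blast
        obtain x y where xy: "e = {x,y}" "x \<in> Vs j" "y \<in> Vs j" "Es j x y" using edge_in[OF j(2)] by blast
        have "x \<in> V'" "y \<in> V'" using e xy unfolding edges_def adj_in_def by (auto simp: doubleton_eq_iff)
        hence "e \<in> edges (Vs' l) (Es' l)" using xy l False unfolding Vs'_def Es'_def
          by (auto intro!: edge_intro)
        thus ?thesis using l by blast
      qed
    qed
  qed
  thus ?thesis by (rule cobox_le)
qed

lemma drop_cover:
  assumes v: "valid V E k Vs Es" and VV: "V' \<subseteq> V" and i: "i < k"
    and cov: "\<forall>e\<in>edges V' E. e \<notin> edges (Vs i) (Es i)"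
  shows "cobox V' E \<le> k - 1"
proof -
  define Vs' where "Vs' l = Vs (skip i l) \<inter> V'" for l
  define Es' where "Es' l = Es (skip i l)" for l
  have "valid V' E (k - 1) Vs' Es'"
    unfolding valid_def
  proof (intro conjI allI impI)
    fix l assume l: "l < k - 1"
    have s: "skip i l < k" using skip_props[OF i l] by blast
    show "Vs' l \<subseteq> V'" unfolding Vs'_def by auto
    show "\<forall>x\<in>Vs' l. \<forall>y\<in>Vs' l. Es' l x y \<longrightarrow> E x y"
      using v s unfolding Vs'_def Es'_def valid_def by auto
    have "cointerval (Vs (skip i l)) (Es (skip i l))" using v s unfolding valid_def by blast
    then show "cointerval (Vs' l) (Es' l)"
      using cointerval_restrict unfolding Vs'_def Es'_def by auto
  next
    show "edges V' E \<subseteq> (\<Union>l<k - 1. edges (Vs' l) (Es' l))"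
    proof
      fix e assume e: "e \<in> edges V' E"
      have "e \<in> edges V E" using e VV unfolding edges_def adj_in_def by blast
      then obtain j where j: "j < k" "e \<in> edges (Vs j) (Es j)" using v unfolding valid_def by blast
      have ji: "j \<noteq> i" using j cov e by blast
      obtain l where l: "l < k - 1" "skip i l = j" using skip_inv[of j i k] ji j i by blast
      obtain x y where xy: "e = {x,y}" "x \<in> Vs j" "y \<in> Vs j" "Es j x y" using edge_in[OF j(2)] by blast
      have "x \<in> V'" "y \<in> V'" using e xy unfolding edges_def adj_in_def by (auto simp: doubleton_eq_iff)
      hence "e \<in> edges (Vs' l) (Es' l)" using xy l unfolding Vs'_def Es'_def
        by (auto intro!: edge_intro)
      thus "e \<in> (\<Union>l<k - 1. edges (Vs' l) (Es' l))" using l by blast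
    qed
  qed
  thus ?thesis by (rule cobox_le)
qed



lemma adj_inI: "x \<in> W \<Longrightarrow> y \<in> W \<Longrightarrow> E x y \<Longrightarrow> adj_in W E x y"
  unfolding adj_in_def by blast

lemma reach_sym:
  assumes sym: "\<And>x y. E x y \<Longrightarrow> E y x" and r: "(adj_in W E)\<^sup>*\<^sup>* x y"
  shows "(adj_in W E)\<^sup>*\<^sup>* y x"
  using r
proof (induction rule: rtranclp_induct)
  case base then show ?case by simp
next
  case (step y z)
  have "adj_in W E z y" using step(2) sym unfolding adj_in_def by blast
  then show ?case using step(3) by (rule converse_rtranclp_into_rtranclp)
qed

lemma reach_mono:
  assumes "W \<subseteq> W'" "(adj_in W E)\<^sup>*\<^sup>* x y" shows "(adj_in W' E)\<^sup>*\<^sup>* x y"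
  using assms(2)
proof (induction rule: rtranclp_induct)
  case base then show ?case by simp
next
  case (step y z)
  have "adj_in W' E y z" using step(2) assms(1) unfolding adj_in_def by blast
  then show ?case using step(3) by (rule rtranclp.rtrancl_into_rtrancl[rotated])
qed

lemma cross_edge:
  assumes "(adj_in W E)\<^sup>*\<^sup>* s t" "s \<in> A" "t \<notin> A"
  shows "\<exists>a\<in>A. \<exists>b\<in>W - A. E a b"
  using assms
proof (induction rule: rtranclp_induct)
  case base then show ?case by simp
next
  case (step y z)
  show ?case
  proof (cases "y \<in> A")
    case True then show ?thesis using step unfolding adj_in_def by blast
  next
    case False then show ?thesis using step by blast
  qed
qed

lemma conn_cut:
  assumes "graph_connected W E" "A \<subseteq> W" "A \<noteq> {}" "A \<noteq> W"
  shows "\<exists>a\<in>A. \<exists>b\<in>W - A. E a b"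
proof -
  obtain s where s: "s \<in> A" using assms by blast
  obtain t where t: "t \<in> W" "t \<notin> A" using assms by blast
  have "(adj_in W E)\<^sup>*\<^sup>* s t" using assms(1,2) s t unfolding graph_connected_def by blast
  then show ?thesis by (rule cross_edge[OF _ s t(2)])
qed

lemma cut_conn:
  assumes ne: "W \<noteq> {}" and c: "\<And>A. A \<subseteq> W \<Longrightarrow> A \<noteq> {} \<Longrightarrow> A \<noteq> W \<Longrightarrow> \<exists>a\<in>A. \<exists>b\<in>W - A. E a b"
  shows "graph_connected W E"
  unfolding graph_connected_def
proof (intro conjI ballI)
  show "W \<noteq> {}" by fact
  fix x y assume x: "x \<in> W" and y: "y \<in> W"
  define A where "A = {z \<in> W. (adj_in W E)\<^sup>*\<^sup>* x z}"
  have "A = W"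
  proof (rule ccontr)
    assume "A \<noteq> W"
    moreover have "A \<subseteq> W" "A \<noteq> {}" using x unfolding A_def by auto
    ultimately obtain a b where ab: "a \<in> A" "b \<in> W - A" "E a b" using c by blast
    have e: "adj_in W E a b" using ab unfolding A_def adj_in_def by blast
    have "(adj_in W E)\<^sup>*\<^sup>* x a" using ab unfolding A_def by blast
    then have "(adj_in W E)\<^sup>*\<^sup>* x b" using e by (rule rtranclp.rtrancl_into_rtrancl)
    then show False using ab unfolding A_def by blast
  qed
  then have "y \<in> A" using y by simp
  then show "(adj_in W E)\<^sup>*\<^sup>* x y" unfolding A_def by simp
qed

lemma ncomp_conn:
  assumes "graph_connected W E" shows "ncomp W E = 1"
proof -
  have "\<forall>x\<in>W. {y \<in> W. (adj_in W E)\<^sup>*\<^sup>* x y} = W"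
    using assms unfolding graph_connected_def by auto
  moreover have "W \<noteq> {}" using assms unfolding graph_connected_def by blast
  ultimately have "(\<lambda>x. {y \<in> W. (adj_in W E)\<^sup>*\<^sup>* x y}) ` W = {W}"
    by auto
  then show ?thesis unfolding ncomp_def by simp
qed

lemma ncomp_empty: "ncomp {} E = 0" unfolding ncomp_def by simp

lemma conn_ncomp:
  assumes fin: "finite W" and ne: "W \<noteq> {}" and n: "ncomp W E \<le> 1"
  shows "graph_connected W E"
proof -
  define f where "f x = {y \<in> W. (adj_in W E)\<^sup>*\<^sup>* x y}" for x
  have "finite (f ` W)" using fin by simp
  moreover have "f ` W \<noteq> {}" using ne by simp
  ultimately have "card (f ` W) \<noteq> 0" by simp
  then have "card (f ` W) = 1" using n unfolding ncomp_def f_def by simp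
  then obtain S where S: "f ` W = {S}" using card_1_singletonE by blast
  show ?thesis unfolding graph_connected_def
  proof (intro conjI ballI)
    show "W \<noteq> {}" by fact
    fix x y assume x: "x \<in> W" and y: "y \<in> W"
    have "f x = S" "f y = S" using S x y by blast+
    moreover have "y \<in> f y" using y unfolding f_def by simp
    ultimately have "y \<in> f x" by simp
    then show "(adj_in W E)\<^sup>*\<^sup>* x y" unfolding f_def by simp
  qed
qed

lemma nocut_intro:
  assumes "graph_connected S E"
    and "\<And>z. z \<in> S \<Longrightarrow> S - {z} \<noteq> {} \<Longrightarrow> graph_connected (S - {z}) E"
  shows "no_cut_vertex S E"
  unfolding no_cut_vertex_def cut_vertex_def
proof (intro ballI notI)
  fix z assume z: "z \<in> S" and c: "z \<in> S \<and> ncomp S E < ncomp (S - {z}) E"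
  have "ncomp S E = 1" using assms(1) ncomp_conn by blast
  moreover have "ncomp (S - {z}) E \<le> 1"
  proof (cases "S - {z} = {}")
    case True
    then have "ncomp (S - {z}) E = 0" using ncomp_empty by metis
    then show ?thesis by simp
  next
    case False
    then have "graph_connected (S - {z}) E" using assms(2) z by blast
    then have "ncomp (S - {z}) E = 1" by (rule ncomp_conn)
    then show ?thesis by simp
  qed
  ultimately show False using c by simp
qed

lemma not_cut_conn:
  assumes "finite V" "graph_connected V E" "a \<in> V" "\<not> cut_vertex V E a" "V - {a} \<noteq> {}"
  shows "graph_connected (V - {a}) E"
proof -
  have "ncomp V E = 1" using assms(2) by (rule ncomp_conn)
  then have "ncomp (V - {a}) E \<le> 1" using assms(3,4) unfolding cut_vertex_def by simp
  moreover have "finite (V - {a})" using assms(1) by simp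
  ultimately show ?thesis using conn_ncomp assms(5) by blast
qed

lemma conn_clique:
  assumes "is_clique K E" "K \<noteq> {}" shows "graph_connected K E"
  unfolding graph_connected_def
proof (intro conjI ballI)
  show "K \<noteq> {}" by fact
  fix x y assume "x \<in> K" "y \<in> K"
  show "(adj_in K E)\<^sup>*\<^sup>* x y"
  proof (cases "x = y")
    case True then show ?thesis by simp
  next
    case False
    then have "adj_in K E x y" using assms(1) \<open>x \<in> K\<close> \<open>y \<in> K\<close> unfolding is_clique_def adj_in_def by blast
    then show ?thesis by (rule r_into_rtranclp)
  qed
qed

lemma conn_union:
  assumes sym: "\<And>x y. E x y \<Longrightarrow> E y x"
    and cA: "graph_connected A E" and cB: "graph_connected B E"
    and ab: "a \<in> A" "b \<in> B" "E a b"
  shows "graph_connected (A \<union> B) E"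
proof -
  have rA: "(adj_in (A \<union> B) E)\<^sup>*\<^sup>* x y" if "x \<in> A" "y \<in> A" for x y
  proof -
    have "(adj_in A E)\<^sup>*\<^sup>* x y" using cA that unfolding graph_connected_def by blast
    then show ?thesis by (rule reach_mono[rotated]) blast
  qed
  have rB: "(adj_in (A \<union> B) E)\<^sup>*\<^sup>* x y" if "x \<in> B" "y \<in> B" for x y
  proof -
    have "(adj_in B E)\<^sup>*\<^sup>* x y" using cB that unfolding graph_connected_def by blast
    then show ?thesis by (rule reach_mono[rotated]) blast
  qed
  have e: "adj_in (A \<union> B) E a b" using ab unfolding adj_in_def by blast
  have rAB: "(adj_in (A \<union> B) E)\<^sup>*\<^sup>* x y" if "x \<in> A" "y \<in> B" for x y
  proof -
    have "(adj_in (A \<union> B) E)\<^sup>*\<^sup>* x a" using rA that ab by blast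
    also have "(adj_in (A \<union> B) E)\<^sup>*\<^sup>* a b" using e by blast
    also have "(adj_in (A \<union> B) E)\<^sup>*\<^sup>* b y" using rB that ab by blast
    finally show ?thesis .
  qed
  have rBA: "(adj_in (A \<union> B) E)\<^sup>*\<^sup>* x y" if "x \<in> B" "y \<in> A" for x y
    by (rule reach_sym[where E=E and W="A \<union> B", OF sym rAB[OF that(2) that(1)]])
  show ?thesis unfolding graph_connected_def
  proof (intro conjI ballI)
    show "A \<union> B \<noteq> {}" using ab by blast
    fix x y assume xy: "x \<in> A \<union> B" "y \<in> A \<union> B"
    show "(adj_in (A \<union> B) E)\<^sup>*\<^sup>* x y"
    proof (cases "x \<in> A")
      case True then show ?thesis using xy rA rAB by blast
    next
      case False then show ?thesis using xy rB rBA by blast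
    qed
  qed
qed



lemma sg_sym: "sgraph V E \<Longrightarrow> E x y \<Longrightarrow> E y x" unfolding sgraph_def by blast
lemma sg_irr: "sgraph V E \<Longrightarrow> \<not> E x x" unfolding sgraph_def by blast
lemma sg_in: "sgraph V E \<Longrightarrow> E x y \<Longrightarrow> x \<in> V \<and> y \<in> V" unfolding sgraph_def by blast
lemma sg_fin: "sgraph V E \<Longrightarrow> finite V" unfolding sgraph_def by blast

lemma clique_sub: "is_clique Q E \<Longrightarrow> X \<subseteq> Q \<Longrightarrow> is_clique X E"
  unfolding is_clique_def by blast

lemma conn_single: "graph_connected {y} E"
  unfolding graph_connected_def by simp

lemma block_max: "is_block V E Q \<Longrightarrow> Q \<subseteq> S \<Longrightarrow> S \<subseteq> V \<Longrightarrow> graph_connected S E \<Longrightarrow> no_cut_vertex S E \<Longrightarrow> S = Q"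
  unfolding is_block_def by blast

lemma BL:
  assumes sg: "sgraph V E" and blk: "is_block V E Q" and cl: "is_clique Q E"
    and y: "y \<in> V" "y \<notin> Q" and ab: "a \<in> Q" "b \<in> Q" "a \<noteq> b" "E y a" "E y b"
  shows False
proof -
  have QV: "Q \<subseteq> V" using blk unfolding is_block_def by blast
  have sym: "\<And>x y. E x y \<Longrightarrow> E y x" using sg sg_sym by metis
  have c1: "graph_connected (Q \<union> {y}) E"
  proof (rule conn_union[OF sym conn_clique[OF cl] conn_single, where a=a and b=y])
    show "E a y" using ab(4) sym by blast
  qed (use ab in auto)
  have nc: "no_cut_vertex (Q \<union> {y}) E"
  proof (rule nocut_intro[OF c1])
    fix z assume z: "z \<in> Q \<union> {y}" "Q \<union> {y} - {z} \<noteq> {}"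
    show "graph_connected (Q \<union> {y} - {z}) E"
    proof (cases "z = y")
      case True
      then have "Q \<union> {y} - {z} = Q" using y by auto
      then show ?thesis using conn_clique[OF cl] ab by auto
    next
      case False
      then have eq: "Q \<union> {y} - {z} = (Q - {z}) \<union> {y}" by auto
      obtain c where c: "c \<in> Q - {z}" "E y c" using ab by (cases "z = a") auto
      have "graph_connected ((Q - {z}) \<union> {y}) E"
      proof (rule conn_union[OF sym conn_clique[OF clique_sub[OF cl] ] conn_single, where a=c and b=y])
        show "E c y" using c(2) sym by blast
      qed (use c in auto)
      then show ?thesis using eq by simp
    qed
  qed
  have "Q \<union> {y} = Q" by (rule block_max[OF blk _ _ c1 nc]) (use QV y in auto)
  then show False using y by auto
qed

lemma block_exists:
  assumes sg: "sgraph V E" and e: "E u x"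
  shows "\<exists>B. is_block V E B \<and> u \<in> B \<and> x \<in> B"
proof -
  have sym: "\<And>x y. E x y \<Longrightarrow> E y x" using sg sg_sym by metis
  have ux: "u \<noteq> x" using e sg_irr[OF sg] by metis
  have inV: "u \<in> V" "x \<in> V" using sg_in[OF sg e] by auto
  define P where "P S \<longleftrightarrow> {u,x} \<subseteq> S \<and> S \<subseteq> V \<and> graph_connected S E \<and> no_cut_vertex S E" for S
  have ex: "E x u" using e sym by blast
  have cl: "is_clique {u,x} E" unfolding is_clique_def using e ex by auto
  have c0: "graph_connected {u,x} E" using conn_clique[OF cl] by simp
  have "no_cut_vertex {u,x} E"
  proof (rule nocut_intro[OF c0])
    fix z assume "z \<in> {u,x}" "{u,x} - {z} \<noteq> {}"
    then have "{u,x} - {z} = {x} \<or> {u,x} - {z} = {u}" using ux by auto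
    then show "graph_connected ({u,x} - {z}) E" using conn_single by metis
  qed
  then have "P {u,x}" unfolding P_def using c0 inV by auto
  then obtain B where B: "P B" and minB: "\<And>S. P S \<Longrightarrow> card V - card B \<le> card V - card S"
    using ex_has_least_nat[of P "{u,x}" "\<lambda>S. card V - card S"] by blast
  have fin: "finite V" using sg sg_fin by blast
  have "is_block V E B" unfolding is_block_def
  proof (intro conjI allI impI)
    show "B \<subseteq> V" "graph_connected B E" "no_cut_vertex B E" using B unfolding P_def by auto
    fix B' assume h: "B \<subseteq> B' \<and> B' \<subseteq> V \<and> graph_connected B' E \<and> no_cut_vertex B' E"
    then have "P B'" using B unfolding P_def by auto
    then have "card V - card B \<le> card V - card B'" by (rule minB)
    moreover have "card B' \<le> card V" using h fin card_mono by blast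
    moreover have "card B \<le> card B'" using h fin card_mono finite_subset by metis
    ultimately have "card B' = card B" by linarith
    moreover have "finite B'" using h fin finite_subset by blast
    ultimately show "B' = B" using h card_subset_eq by metis
  qed
  then show ?thesis using B unfolding P_def by auto
qed

lemma clique_side:
  assumes cl: "is_clique K E" and ne: "\<forall>p\<in>A. \<forall>q\<in>W - A. \<not> E p q" and KW: "K \<subseteq> W"
  shows "K \<subseteq> A \<or> K \<inter> A = {}"
proof (rule ccontr)
  assume "\<not> (K \<subseteq> A \<or> K \<inter> A = {})"
  then obtain p q where "p \<in> K \<inter> A" "q \<in> K - A" by blast
  moreover then have "p \<noteq> q" by blast
  ultimately show False using cl ne KW unfolding is_clique_def by blast
qed

lemma L2:
  assumes sg: "sgraph V E" and cV: "graph_connected V E" and cl: "is_clique Q E" and QV: "Q \<subseteq> V"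
    and u: "u \<in> Q" and b: "b \<in> Q" "b \<noteq> u" and cut: "cut_vertex V E u"
  shows "\<exists>x\<in>V - Q. E u x"
proof (rule ccontr)
  assume nx: "\<not> (\<exists>x\<in>V - Q. E u x)"
  have sym: "\<And>x y. E x y \<Longrightarrow> E y x" using sg sg_sym by metis
  have "graph_connected (V - {u}) E"
  proof (rule cut_conn)
    show "V - {u} \<noteq> {}" using b QV by blast
    fix A assume A: "A \<subseteq> V - {u}" "A \<noteq> {}" "A \<noteq> V - {u}"
    show "\<exists>a\<in>A. \<exists>c\<in>V - {u} - A. E a c"
    proof (rule ccontr)
      assume "\<not> (\<exists>a\<in>A. \<exists>c\<in>V - {u} - A. E a c)"
      then have ne: "\<forall>p\<in>A. \<forall>q\<in>V - {u} - A. \<not> E p q" by blast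
      have side: "Q - {u} \<subseteq> A \<or> (Q - {u}) \<inter> A = {}"
        by (rule clique_side[OF clique_sub[OF cl] ne]) (use QV in auto)
      define A' where "A' = (if (Q - {u}) \<inter> A = {} then A else V - {u} - A)"
      have A'1: "A' \<subseteq> V - {u}" "A' \<noteq> {}" unfolding A'_def using A by auto
      have A'2: "A' \<inter> Q = {}" unfolding A'_def using side A by auto
      have ne': "\<forall>p\<in>A'. \<forall>q\<in>V - {u} - A'. \<not> E p q"
      proof (cases "(Q - {u}) \<inter> A = {}")
        case True then show ?thesis using ne unfolding A'_def by simp
      next
        case False
        have "\<forall>p\<in>V - {u} - A. \<forall>q\<in>A. \<not> E p q"
        proof (intro ballI notI)
          fix p q assume "p \<in> V - {u} - A" "q \<in> A" "E p q"
          then show False using ne sym[of p q] by blast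
        qed
        moreover have "V - {u} - (V - {u} - A) = A" using A by blast
        ultimately show ?thesis using False unfolding A'_def by simp
      qed
      have "A' \<noteq> V" using A'1 u QV by blast
      then obtain p c where pc: "p \<in> A'" "c \<in> V - A'" "E p c"
        using conn_cut[OF cV, of A'] A'1 by blast
      show False
      proof (cases "c = u")
        case True
        then have "E u p" using sym[OF pc(3)] by simp
        moreover have "p \<in> V - Q" using pc A'1 A'2 by blast
        ultimately show False using nx by blast
      next
        case False then show False using ne' pc by blast
      qed
    qed
  qed
  then have "ncomp (V - {u}) E = 1" by (rule ncomp_conn)
  moreover have "ncomp V E = 1" using cV by (rule ncomp_conn)
  ultimately show False using cut unfolding cut_vertex_def by simp
qed

lemma comp_reach:
  assumes "(adj_in W E)\<^sup>*\<^sup>* x y"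
  shows "(adj_in {z \<in> W. (adj_in W E)\<^sup>*\<^sup>* x z} E)\<^sup>*\<^sup>* x y"
  using assms
proof (induction rule: rtranclp_induct)
  case base then show ?case by simp
next
  case (step y z)
  have "adj_in {z \<in> W. (adj_in W E)\<^sup>*\<^sup>* x z} E y z"
    using step(1,2) unfolding adj_in_def by (auto intro: rtranclp.rtrancl_into_rtrancl[of _ x y z])
  then show ?case using step(3) by (rule rtranclp.rtrancl_into_rtrancl[rotated])
qed



lemma L:
  assumes sg: "sgraph V E" and cV: "graph_connected V E" and blk: "is_block V E Q"
    and cl: "is_clique Q E" and a: "a \<in> Q" and b: "b \<in> Q" "b \<noteq> a"
    and x: "x \<in> V" "x \<notin> Q" and ax: "E a x"
  shows "cut_vertex V E a"
proof (rule ccontr)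
  assume nc: "\<not> cut_vertex V E a"
  have sym: "\<And>x y. E x y \<Longrightarrow> E y x" using sg sg_sym by metis
  have fin: "finite V" using sg sg_fin by blast
  have QV: "Q \<subseteq> V" using blk unfolding is_block_def by blast
  have cVa: "graph_connected (V - {a}) E"
    by (rule not_cut_conn[OF fin cV _ nc]) (use a b QV in auto)
  define P where "P X \<longleftrightarrow> X \<subseteq> V - Q \<and> x \<in> X \<and> graph_connected X E \<and> (\<exists>y\<in>X. \<exists>c\<in>Q - {a}. E y c)" for X
  define X0 where "X0 = {y \<in> V - Q. (adj_in (V - Q) E)\<^sup>*\<^sup>* x y}"
  have X0a: "X0 \<subseteq> V - Q" "x \<in> X0" using x unfolding X0_def by auto
  have rX0: "(adj_in X0 E)\<^sup>*\<^sup>* x y" if "y \<in> X0" for y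
    using comp_reach[of "V - Q" E x y] that unfolding X0_def by blast
  have cX0: "graph_connected X0 E" unfolding graph_connected_def
  proof (intro conjI ballI)
    show "X0 \<noteq> {}" using X0a by blast
    fix y1 y2 assume "y1 \<in> X0" "y2 \<in> X0"
    then have "(adj_in X0 E)\<^sup>*\<^sup>* y1 x" "(adj_in X0 E)\<^sup>*\<^sup>* x y2"
      using rX0 reach_sym[where E=E, OF sym] by blast+
    then show "(adj_in X0 E)\<^sup>*\<^sup>* y1 y2" by simp
  qed
  have "\<exists>y\<in>X0. \<exists>c\<in>Q - {a}. E y c"
  proof -
    have "X0 \<subseteq> V - {a}" "X0 \<noteq> {}" using X0a a by auto
    moreover have "X0 \<noteq> V - {a}" using X0a b QV by blast
    ultimately obtain y c where yc: "y \<in> X0" "c \<in> V - {a} - X0" "E y c"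
      using conn_cut[OF cVa, of X0] by blast
    have "c \<in> Q"
    proof (rule ccontr)
      assume cQ: "c \<notin> Q"
      have "adj_in (V - Q) E y c" using yc cQ X0a unfolding adj_in_def by blast
      moreover have "(adj_in (V - Q) E)\<^sup>*\<^sup>* x y" using yc unfolding X0_def by blast
      ultimately have "(adj_in (V - Q) E)\<^sup>*\<^sup>* x c" by (simp add: rtranclp.rtrancl_into_rtrancl)
      then have "c \<in> X0" using yc cQ unfolding X0_def by blast
      then show False using yc by blast
    qed
    then show ?thesis using yc by blast
  qed
  then have "P X0" unfolding P_def using X0a cX0 by blast
  then obtain X where PX: "P X" and minX: "\<And>X'. P X' \<Longrightarrow> card X \<le> card X'"
    using ex_has_least_nat[of P X0 card] by blast
  have XVQ: "X \<subseteq> V - Q" and xX: "x \<in> X" and cX: "graph_connected X E"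
    using PX unfolding P_def by auto
  obtain y c where yc: "y \<in> X" "c \<in> Q - {a}" "E y c" using PX unfolding P_def by blast
  have finX: "finite X" using XVQ fin finite_subset by blast
  define S where "S = Q \<union> X"
  have SV: "S \<subseteq> V" using QV XVQ unfolding S_def by blast
  have Qne: "Q \<noteq> {}" using a by blast
  have cS: "graph_connected S E" unfolding S_def
    by (rule conn_union[OF sym conn_clique[OF cl Qne] cX a xX ax])
  have ncS: "no_cut_vertex S E"
  proof (rule nocut_intro[OF cS])
    fix z assume z: "z \<in> S" "S - {z} \<noteq> {}"
    show "graph_connected (S - {z}) E"
    proof (rule cut_conn[OF z(2)])
      fix A assume A: "A \<subseteq> S - {z}" "A \<noteq> {}" "A \<noteq> S - {z}"
      show "\<exists>p\<in>A. \<exists>q\<in>S - {z} - A. E p q"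
      proof (rule ccontr)
        assume "\<not> (\<exists>p\<in>A. \<exists>q\<in>S - {z} - A. E p q)"
        then have ne: "\<forall>p\<in>A. \<forall>q\<in>S - {z} - A. \<not> E p q" by blast
        have side: "Q - {z} \<subseteq> A \<or> (Q - {z}) \<inter> A = {}"
          by (rule clique_side[OF clique_sub[OF cl] ne]) (auto simp: S_def)
        have Qz: "Q - {z} \<noteq> {}" using a b by blast
        define A' where "A' = (if (Q - {z}) \<inter> A = {} then A else S - {z} - A)"
        have A'1: "A' \<subseteq> S - {z}" "A' \<noteq> {}" unfolding A'_def using A by auto
        have A'2: "A' \<inter> Q = {}" unfolding A'_def using side A Qz by auto
        have A'X: "A' \<subseteq> X - {z}" using A'1 A'2 unfolding S_def by blast
        have ne': "\<forall>p\<in>A'. \<forall>q\<in>S - {z} - A'. \<not> E p q"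
        proof (cases "(Q - {z}) \<inter> A = {}")
          case True then show ?thesis using ne unfolding A'_def by simp
        next
          case False
          have "\<forall>p\<in>S - {z} - A. \<forall>q\<in>A. \<not> E p q"
          proof (intro ballI notI)
            fix p q assume "p \<in> S - {z} - A" "q \<in> A" "E p q"
            then show False using ne sym[of p q] by blast
          qed
          moreover have "S - {z} - (S - {z} - A) = A" using A by blast
          ultimately show ?thesis using False unfolding A'_def by simp
        qed
        have XQ: "X \<inter> Q = {}" using XVQ by blast
        show False
        proof (cases "z \<in> X")
          case False
          have "A' = X"
          proof (rule ccontr)
            assume "A' \<noteq> X"
            moreover have "A' \<subseteq> X" "A' \<noteq> {}" using A'X A'1 by auto
            ultimately obtain p q where pq: "p \<in> A'" "q \<in> X - A'" "E p q"
              using conn_cut[OF cX, of A'] by blast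
            have "q \<in> S - {z} - A'" using pq False unfolding S_def by blast
            then show False using ne' pq by blast
          qed
          then have xA': "x \<in> A'" "y \<in> A'" using xX yc by auto
          show False
          proof (cases "z = a")
            case True
            have "c \<in> S - {z} - A'" using yc True A'2 unfolding S_def by blast
            then show False using ne' xA'(2) yc(3) by blast
          next
            case False
            have "a \<in> S - {z} - A'" using a False A'2 unfolding S_def by blast
            then show False using ne' xA'(1) sym[OF ax] by blast
          qed
        next
          case zX: True
          define X'' where "X'' = X - A'"
          have aS: "a \<in> S - {z} - A'" using a zX XQ A'2 unfolding S_def by blast
          have x'': "x \<in> X''"
          proof -
            have "x \<notin> A'" using ne' aS sym[OF ax] by blast
            then show ?thesis using xX unfolding X''_def by blast
          qed
          have cS': "c \<in> S - {z} - A'" using yc zX XQ A'2 unfolding S_def by blast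
          have y'': "y \<in> X''"
          proof -
            have "y \<notin> A'" using ne' cS' yc(3) by blast
            then show ?thesis using yc unfolding X''_def by blast
          qed
          have z'': "z \<in> X''" using zX A'X unfolding X''_def by blast
          have cX'': "graph_connected X'' E"
          proof (rule cut_conn)
            show "X'' \<noteq> {}" using x'' by blast
            fix C assume C: "C \<subseteq> X''" "C \<noteq> {}" "C \<noteq> X''"
            define Dd where "Dd = (if z \<in> C then X'' - C else C)"
            have D1: "Dd \<subseteq> X''" "Dd \<noteq> {}" "z \<notin> Dd" unfolding Dd_def using C by auto
            have D2: "Dd \<subseteq> X" "Dd \<noteq> X" using D1 z'' unfolding X''_def by auto
            obtain d1 d2 where dd: "d1 \<in> Dd" "d2 \<in> X - Dd" "E d1 d2"
              using conn_cut[OF cX, of Dd] D1 D2 by blast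
            have d2A: "d2 \<notin> A'"
            proof
              assume d2: "d2 \<in> A'"
              have "d1 \<in> S - {z} - A'" using dd D1 unfolding S_def X''_def by blast
              then show False using ne' d2 sym[OF dd(3)] by blast
            qed
            then have d2'': "d2 \<in> X'' - Dd" using dd unfolding X''_def by blast
            show "\<exists>p\<in>C. \<exists>q\<in>X'' - C. E p q"
            proof (cases "z \<in> C")
              case True
              then have "d2 \<in> C" "d1 \<in> X'' - C" using d2'' dd(1) unfolding Dd_def by auto
              then show ?thesis using sym[OF dd(3)] by blast
            next
              case False
              then show ?thesis using d2'' dd unfolding Dd_def by auto
            qed
          qed
          have "P X''" unfolding P_def
            using XVQ x'' cX'' y'' yc unfolding X''_def by blast
          then have "card X \<le> card X''" by (rule minX)
          moreover have "X'' \<subset> X" using A'X A'1 unfolding X''_def by blast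
          then have "card X'' < card X" using finX psubset_card_mono by blast
          ultimately show False by simp
        qed
      qed
    qed
  qed
  have "S = Q" by (rule block_max[OF blk _ SV cS ncS]) (auto simp: S_def)
  then show False using xX x unfolding S_def by blast
qed



lemma two_K2:
  fixes la ra lb rb lc rc ld rd :: real
  assumes "la \<le> ra" "lb \<le> rb" "lc \<le> rc" "ld \<le> rd"
   "ra < lb \<or> rb < la" "rc < ld \<or> rd < lc"
   "\<not>(ra < lc \<or> rc < la)" "\<not>(ra < ld \<or> rd < la)" "\<not>(rb < lc \<or> rc < lb)" "\<not>(rb < ld \<or> rd < lb)"
  shows False using assms by linarith

lemma six_conf:
  fixes lu ru lp rp lw rw lq rq lx rx ly ry :: real
  assumes "lu \<le> ru" "lp \<le> rp" "lw \<le> rw" "lq \<le> rq" "lx \<le> rx" "ly \<le> ry"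
   "ru < lp \<or> rp < lu" "rw < lq \<or> rq < lw" "rx < ly \<or> ry < lx"
   "\<not>(rp < lw \<or> rw < lp)" "\<not>(rp < lq \<or> rq < lp)" "\<not>(rp < lx \<or> rx < lp)" "\<not>(rp < ly \<or> ry < lp)"
   "\<not>(rq < lu \<or> ru < lq)" "\<not>(rq < lx \<or> rx < lq)" "\<not>(rq < ly \<or> ry < lq)"
   "\<not>(ru < ly \<or> ry < lu)" "\<not>(rw < ly \<or> ry < lw)"
  shows False using assms by linarith

lemma one_out:
  fixes lc rc lp rp lx rx ly ry lx' rx' ly' ry' :: real
  assumes "lc \<le> rc" "lp \<le> rp" "lx \<le> rx" "ly \<le> ry" "lx' \<le> rx'" "ly' \<le> ry'"
   "rc < lp \<or> rp < lc" "rx < ly \<or> ry < lx" "rx' < ly' \<or> ry' < lx'"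
   "\<not>(rp < lx \<or> rx < lp)" "\<not>(rp < ly \<or> ry < lp)" "\<not>(rp < lx' \<or> rx' < lp)" "\<not>(rp < ly' \<or> ry' < lp)"
   "\<not>(rc < ly \<or> ry < lc)" "\<not>(rc < ly' \<or> ry' < lc)"
   "\<not>(rx < ly' \<or> ry' < lx)" "\<not>(rx' < ly \<or> ry < lx')"
  shows False using assms by linarith

lemma ci_2K2:
  assumes ci: "cointerval W F" and W: "a \<in> W" "b \<in> W" "c \<in> W" "d \<in> W"
    and e: "F a b" "F c d" "a \<noteq> b" "c \<noteq> d"
    and n: "a \<noteq> c \<Longrightarrow> \<not> F a c" "a \<noteq> d \<Longrightarrow> \<not> F a d" "b \<noteq> c \<Longrightarrow> \<not> F b c" "b \<noteq> d \<Longrightarrow> \<not> F b d"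
    and dd: "a \<noteq> c" "a \<noteq> d" "b \<noteq> c" "b \<noteq> d"
  shows False
proof -
  obtain l r :: "'a \<Rightarrow> real" where lr0: "(\<forall>x\<in>W. l x \<le> r x) \<and>
     (\<forall>x\<in>W. \<forall>y\<in>W. x \<noteq> y \<longrightarrow> (F x y \<longleftrightarrow> r x < l y \<or> r y < l x))"
    using ci unfolding cointerval_def by (elim exE) (rule that)
  have lr: "\<And>x. x \<in> W \<Longrightarrow> l x \<le> r x"
    "\<And>x y. x \<in> W \<Longrightarrow> y \<in> W \<Longrightarrow> x \<noteq> y \<Longrightarrow> F x y \<longleftrightarrow> r x < l y \<or> r y < l x"
    using lr0 by auto
  have "r a < l b \<or> r b < l a" using lr(2)[of a b] W e by simp
  moreover have "r c < l d \<or> r d < l c" using lr(2)[of c d] W e by simp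
  moreover have "\<not>(r a < l c \<or> r c < l a)" using lr(2)[of a c] W n dd by simp
  moreover have "\<not>(r a < l d \<or> r d < l a)" using lr(2)[of a d] W n dd by simp
  moreover have "\<not>(r b < l c \<or> r c < l b)" using lr(2)[of b c] W n dd by simp
  moreover have "\<not>(r b < l d \<or> r d < l b)" using lr(2)[of b d] W n dd by simp
  moreover have "l a \<le> r a" "l b \<le> r b" "l c \<le> r c" "l d \<le> r d" using lr(1) W by auto
  ultimately show False using two_K2 by blast
qed

lemma ci_six:
  assumes ci: "cointerval W F" and W: "u \<in> W" "p \<in> W" "w \<in> W" "q \<in> W" "x \<in> W" "y \<in> W"
    and e: "F u p" "F w q" "F x y" "u \<noteq> p" "w \<noteq> q" "x \<noteq> y"
    and dd: "p \<noteq> w" "p \<noteq> q" "p \<noteq> x" "p \<noteq> y" "q \<noteq> u" "q \<noteq> x" "q \<noteq> y" "u \<noteq> y" "w \<noteq> y"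
    and n: "\<not> F p w" "\<not> F p q" "\<not> F p x" "\<not> F p y" "\<not> F q u" "\<not> F q x" "\<not> F q y" "\<not> F u y" "\<not> F w y"
  shows False
proof -
  obtain l r :: "'a \<Rightarrow> real" where lr0: "(\<forall>x\<in>W. l x \<le> r x) \<and>
     (\<forall>x\<in>W. \<forall>y\<in>W. x \<noteq> y \<longrightarrow> (F x y \<longleftrightarrow> r x < l y \<or> r y < l x))"
    using ci unfolding cointerval_def by (elim exE) (rule that)
  have lr: "\<And>x. x \<in> W \<Longrightarrow> l x \<le> r x"
    "\<And>x y. x \<in> W \<Longrightarrow> y \<in> W \<Longrightarrow> x \<noteq> y \<Longrightarrow> F x y \<longleftrightarrow> r x < l y \<or> r y < l x"
    using lr0 by auto
  have "r u < l p \<or> r p < l u" using lr(2)[of u p] W e by simp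
  moreover have "r w < l q \<or> r q < l w" using lr(2)[of w q] W e by simp
  moreover have "r x < l y \<or> r y < l x" using lr(2)[of x y] W e by simp
  moreover have "\<not>(r p < l w \<or> r w < l p)" using lr(2)[of p w] W n dd by simp
  moreover have "\<not>(r p < l q \<or> r q < l p)" using lr(2)[of p q] W n dd by simp
  moreover have "\<not>(r p < l x \<or> r x < l p)" using lr(2)[of p x] W n dd by simp
  moreover have "\<not>(r p < l y \<or> r y < l p)" using lr(2)[of p y] W n dd by simp
  moreover have "\<not>(r q < l u \<or> r u < l q)" using lr(2)[of q u] W n dd by simp
  moreover have "\<not>(r q < l x \<or> r x < l q)" using lr(2)[of q x] W n dd by simp
  moreover have "\<not>(r q < l y \<or> r y < l q)" using lr(2)[of q y] W n dd by simp
  moreover have "\<not>(r u < l y \<or> r y < l u)" using lr(2)[of u y] W n dd by simp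
  moreover have "\<not>(r w < l y \<or> r y < l w)" using lr(2)[of w y] W n dd by simp
  moreover have "l u \<le> r u" "l p \<le> r p" "l w \<le> r w" "l q \<le> r q" "l x \<le> r x" "l y \<le> r y"
    using lr(1) W by auto
  ultimately show False using six_conf by blast
qed

lemma ci_oneout:
  assumes ci: "cointerval W F" and W: "c \<in> W" "p \<in> W" "x \<in> W" "y \<in> W" "x' \<in> W" "y' \<in> W"
    and e: "F c p" "F x y" "F x' y'" "c \<noteq> p" "x \<noteq> y" "x' \<noteq> y'"
    and dd: "p \<noteq> x" "p \<noteq> y" "p \<noteq> x'" "p \<noteq> y'" "c \<noteq> y" "c \<noteq> y'" "x \<noteq> y'" "x' \<noteq> y"
    and n: "\<not> F p x" "\<not> F p y" "\<not> F p x'" "\<not> F p y'" "\<not> F c y" "\<not> F c y'" "\<not> F x y'" "\<not> F x' y"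
  shows False
proof -
  obtain l r :: "'a \<Rightarrow> real" where lr0: "(\<forall>x\<in>W. l x \<le> r x) \<and>
     (\<forall>x\<in>W. \<forall>y\<in>W. x \<noteq> y \<longrightarrow> (F x y \<longleftrightarrow> r x < l y \<or> r y < l x))"
    using ci unfolding cointerval_def by (elim exE) (rule that)
  have lr: "\<And>x. x \<in> W \<Longrightarrow> l x \<le> r x"
    "\<And>x y. x \<in> W \<Longrightarrow> y \<in> W \<Longrightarrow> x \<noteq> y \<Longrightarrow> F x y \<longleftrightarrow> r x < l y \<or> r y < l x"
    using lr0 by auto
  have "r c < l p \<or> r p < l c" using lr(2)[of c p] W e by simp
  moreover have "r x < l y \<or> r y < l x" using lr(2)[of x y] W e by simp
  moreover have "r x' < l y' \<or> r y' < l x'" using lr(2)[of x' y'] W e by simp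
  moreover have "\<not>(r p < l x \<or> r x < l p)" using lr(2)[of p x] W n dd by simp
  moreover have "\<not>(r p < l y \<or> r y < l p)" using lr(2)[of p y] W n dd by simp
  moreover have "\<not>(r p < l x' \<or> r x' < l p)" using lr(2)[of p x'] W n dd by simp
  moreover have "\<not>(r p < l y' \<or> r y' < l p)" using lr(2)[of p y'] W n dd by simp
  moreover have "\<not>(r c < l y \<or> r y < l c)" using lr(2)[of c y] W n dd by simp
  moreover have "\<not>(r c < l y' \<or> r y' < l c)" using lr(2)[of c y'] W n dd by simp
  moreover have "\<not>(r x < l y' \<or> r y' < l x)" using lr(2)[of x y'] W n dd by simp
  moreover have "\<not>(r x' < l y \<or> r y < l x')" using lr(2)[of x' y] W n dd by simp
  moreover have "l c \<le> r c" "l p \<le> r p" "l x \<le> r x" "l y \<le> r y" "l x' \<le> r x'" "l y' \<le> r y'"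
    using lr(1) W by auto
  ultimately show False using one_out by blast
qed

lemma get_graph:
  assumes v: "valid V E k Vs Es" and e: "E a b" "a \<in> V" "b \<in> V" "a \<noteq> b"
  shows "\<exists>i<k. a \<in> Vs i \<and> b \<in> Vs i \<and> Es i a b"
proof -
  have "{a,b} \<in> edges V E" using e by (auto intro: edge_intro simp: adj_in_def)
  then obtain i where i: "i < k" "{a,b} \<in> edges (Vs i) (Es i)" using v unfolding valid_def by blast
  obtain x y where xy: "{a,b} = {x,y}" "x \<in> Vs i" "y \<in> Vs i" "Es i x y" using edge_in[OF i(2)] by blast
  have ci: "cointerval (Vs i) (Es i)" using v i unfolding valid_def by blast
  show ?thesis
  proof (cases "x = a")
    case True
    then have "y = b" using xy(1) e(4) by (auto simp: doubleton_eq_iff)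
    then show ?thesis using i xy True by blast
  next
    case False
    then have "x = b" "y = a" using xy(1) by (auto simp: doubleton_eq_iff)
    then have "Es i a b" using cointerval_sym[OF ci xy(2,3,4)] e(4) by auto
    then show ?thesis using i xy \<open>x = b\<close> \<open>y = a\<close> by blast
  qed
qed

lemma edge_common:
  assumes v: "valid V E k Vs Es" and sg: "sgraph V E" and i: "i < k"
    and e1: "e \<in> edges V' E" and e2: "e \<in> edges (Vs i) (Es i)"
  shows "\<exists>x y. e = {x,y} \<and> x \<in> V' \<and> y \<in> V' \<and> x \<in> Vs i \<and> y \<in> Vs i \<and> Es i x y \<and> E x y \<and> x \<noteq> y"
proof -
  obtain x y where xy: "e = {x,y}" "x \<in> Vs i" "y \<in> Vs i" "Es i x y" using edge_in[OF e2] by blast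
  have "E x y" using v i xy unfolding valid_def by blast
  moreover then have "x \<noteq> y" using sg_irr[OF sg] by metis
  moreover have "x \<in> V'" "y \<in> V'" using e1 xy(1) unfolding edges_def adj_in_def
    by (auto simp: doubleton_eq_iff)
  ultimately show ?thesis using xy by blast
qed

lemma drop_by_edge:
  assumes v: "valid V E k Vs Es" and sg: "sgraph V E" and VV: "V' \<subseteq> V"
    and ab: "E a b" "a \<notin> V'" "b \<notin> V'" and iso: "\<forall>z\<in>V'. \<not> E a z \<and> \<not> E b z"
  shows "cobox V' E \<le> k - 1"
proof -
  have inV: "a \<in> V" "b \<in> V" using sg_in[OF sg ab(1)] by auto
  have ne: "a \<noteq> b" using sg_irr[OF sg] ab(1) by metis
  obtain i where i: "i < k" "a \<in> Vs i" "b \<in> Vs i" "Es i a b" using get_graph[OF v ab(1) inV ne] by blast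
  have ci: "cointerval (Vs i) (Es i)" and sub: "\<forall>x\<in>Vs i. \<forall>y\<in>Vs i. Es i x y \<longrightarrow> E x y"
    using v i unfolding valid_def by auto
  show ?thesis
  proof (rule drop_cover[OF v VV i(1)], intro ballI notI)
    fix e assume e1: "e \<in> edges V' E" and e2: "e \<in> edges (Vs i) (Es i)"
    obtain x y where xy: "e = {x,y}" "x \<in> V'" "y \<in> V'" "x \<in> Vs i" "y \<in> Vs i" "Es i x y" "x \<noteq> y"
      using edge_common[OF v sg i(1) e1 e2] by blast
    have d: "a \<noteq> x" "a \<noteq> y" "b \<noteq> x" "b \<noteq> y" using xy ab by auto
    show False
    proof (rule ci_2K2[OF ci i(2,3) xy(4,5) i(4) xy(6) ne xy(7) _ _ _ _ d])
      show "\<not> Es i a x" using sub i xy iso by blast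
      show "\<not> Es i a y" using sub i xy iso by blast
      show "\<not> Es i b x" using sub i xy iso by blast
      show "\<not> Es i b y" using sub i xy iso by blast
    qed
  qed
qed



lemma via_center:
  assumes v: "valid V E k Vs Es" and sg: "sgraph V E" and i: "i < k"
    and c: "c \<in> Vs i" "pc \<in> Vs i" "Es i c pc" "c \<notin> V'" "pc \<notin> V'"
    and pcN: "\<forall>z. E pc z \<longrightarrow> z = c"
    and e1: "e \<in> edges V' E" and e2: "e \<in> edges (Vs i) (Es i)"
  shows "\<exists>x y. e = {x,y} \<and> x \<in> V' \<and> y \<in> V' \<and> x \<in> Vs i \<and> y \<in> Vs i \<and> Es i x y \<and> E x y \<and> x \<noteq> y \<and> E c x"
proof -
  obtain x y where xy: "e = {x,y}" "x \<in> V'" "y \<in> V'" "x \<in> Vs i" "y \<in> Vs i" "Es i x y" "E x y" "x \<noteq> y"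
    using edge_common[OF v sg i e1 e2] by blast
  have ci: "cointerval (Vs i) (Es i)" and sub: "\<forall>x\<in>Vs i. \<forall>y\<in>Vs i. Es i x y \<longrightarrow> E x y"
    using v i unfolding valid_def by auto
  have cpc: "c \<noteq> pc" using sub c sg_irr[OF sg] by metis
  have d: "c \<noteq> x" "c \<noteq> y" "pc \<noteq> x" "pc \<noteq> y" using xy c by auto
  have "E c x \<or> E c y"
  proof (rule ccontr)
    assume nn: "\<not> (E c x \<or> E c y)"
    show False
    proof (rule ci_2K2[OF ci c(1,2) xy(4,5) c(3) xy(6) cpc xy(8) _ _ _ _ d])
      show "\<not> Es i c x" using sub c xy nn by blast
      show "\<not> Es i c y" using sub c xy nn by blast
      show "\<not> Es i pc x" using sub c xy pcN d by blast
      show "\<not> Es i pc y" using sub c xy pcN d by blast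
    qed
  qed
  moreover have "Es i y x" using cointerval_sym[OF ci xy(4,5,6,8)] .
  moreover have "E y x" using sg_sym[OF sg xy(7)] .
  ultimately show ?thesis using xy by (metis insert_commute)
qed

lemma star_case:
  assumes v: "valid V E k Vs Es" and sg: "sgraph V E" and VV: "V' \<subseteq> V" and vV: "v \<in> V'"
    and nV: "u \<notin> V'" "w \<notin> V'" "p \<notin> V'" "q \<notin> V'"
    and ed: "E u p" "E w q" "E u w" "E u v" "E w v"
    and pp: "\<forall>z. E p z \<longrightarrow> z = u" and qq: "\<forall>z. E q z \<longrightarrow> z = w"
    and iso: "\<forall>z\<in>V'. z \<noteq> v \<longrightarrow> \<not> E u z \<and> \<not> E w z"
    and d: "u \<noteq> w" "p \<noteq> q" "p \<noteq> w" "q \<noteq> u"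
  shows "cobox V' E \<le> k - 1"
proof -
  have up: "u \<noteq> p" "w \<noteq> q" using ed sg_irr[OF sg] by metis+
  have inV: "u \<in> V" "p \<in> V" "w \<in> V" "q \<in> V" using sg_in[OF sg] ed by blast+
  obtain i where i: "i < k" "u \<in> Vs i" "p \<in> Vs i" "Es i u p" using get_graph[OF v ed(1) inV(1,2) up(1)] by blast
  obtain j where j: "j < k" "w \<in> Vs j" "q \<in> Vs j" "Es j w q" using get_graph[OF v ed(2) inV(3,4) up(2)] by blast
  have qq': "\<forall>z. E q z \<longrightarrow> z = w" using qq .
  have starI: "\<exists>y. e = {v,y} \<and> y \<in> V' \<and> E v y \<and> y \<in> Vs i \<and> v \<in> Vs i \<and> Es i v y \<and> y \<noteq> v"
    if e1: "e \<in> edges V' E" and e2: "e \<in> edges (Vs i) (Es i)" for e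
  proof -
    obtain x y where xy: "e = {x,y}" "x \<in> V'" "y \<in> V'" "x \<in> Vs i" "y \<in> Vs i" "Es i x y" "E x y" "x \<noteq> y" "E u x"
      using via_center[OF v sg i(1) i(2,3,4) nV(1,3) pp e1 e2] by blast
    have "x = v" using iso xy by blast
    then show ?thesis using xy by blast
  qed
  have starJ: "\<exists>y. e = {v,y} \<and> y \<in> V' \<and> E v y"
    if e1: "e \<in> edges V' E" and e2: "e \<in> edges (Vs j) (Es j)" for e
  proof -
    obtain x y where xy: "e = {x,y}" "x \<in> V'" "y \<in> V'" "x \<in> Vs j" "y \<in> Vs j" "Es j x y" "E x y" "x \<noteq> y" "E w x"
      using via_center[OF v sg j(1) j(2,3,4) nV(2,4) qq e1 e2] by blast
    have "x = v" using iso xy by blast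
    then show ?thesis using xy by blast
  qed
  show ?thesis
  proof (cases "i = j")
    case True
    have ci: "cointerval (Vs i) (Es i)" and sub: "\<forall>x\<in>Vs i. \<forall>y\<in>Vs i. Es i x y \<longrightarrow> E x y"
      using v i unfolding valid_def by auto
    show ?thesis
    proof (rule drop_cover[OF v VV i(1)], intro ballI notI)
      fix e assume e1: "e \<in> edges V' E" and e2: "e \<in> edges (Vs i) (Es i)"
      obtain y where y: "e = {v,y}" "y \<in> V'" "E v y" "y \<in> Vs i" "v \<in> Vs i" "Es i v y" "y \<noteq> v"
        using starI[OF e1 e2] by blast
      have jj: "w \<in> Vs i" "q \<in> Vs i" "Es i w q" using j True by auto
      have dd: "p \<noteq> w" "p \<noteq> q" "p \<noteq> v" "p \<noteq> y" "q \<noteq> u" "q \<noteq> v" "q \<noteq> y" "u \<noteq> y" "w \<noteq> y"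
        using d nV vV y by auto
      have nE: "\<not> E p w" "\<not> E p q" "\<not> E p v" "\<not> E p y" "\<not> E q u" "\<not> E q v" "\<not> E q y" "\<not> E u y" "\<not> E w y"
        using pp qq d nV vV y iso by auto
      show False
        by (rule ci_six[OF ci i(2,3) jj(1,2) y(5,4) i(4) jj(3) y(6) up y(7)[symmetric] dd])
           (use sub i jj y nE in blast)+
    qed
  next
    case False
    define De where "De x y = ((x = v \<and> E v y) \<or> (y = v \<and> E v x))" for x y
    have ci: "cointerval V' De" unfolding cointerval_def
    proof (intro exI conjI ballI impI)
      let ?l = "\<lambda>z. if z = v then 0 else if E v z then 1 else (0::real)"
      let ?r = "\<lambda>z. if z = v then 0 else (1::real)"
      fix x assume "x \<in> V'" show "?l x \<le> ?r x" by auto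
    next
      let ?l = "\<lambda>z. if z = v then 0 else if E v z then 1 else (0::real)"
      let ?r = "\<lambda>z. if z = v then 0 else (1::real)"
      fix x y assume "x \<in> V'" "y \<in> V'" "x \<noteq> y"
      then show "De x y = (?r x < ?l y \<or> ?r y < ?l x)" unfolding De_def by auto
    qed
    have sub: "\<forall>x\<in>V'. \<forall>y\<in>V'. De x y \<longrightarrow> E x y"
      unfolding De_def using sg_sym[OF sg] by blast
    show ?thesis
    proof (rule replace_cover[OF v VV i(1) j(1) False[symmetric] _ sub ci])
      show "V' \<subseteq> V'" by simp
      show "\<forall>e\<in>edges V' E. e \<in> edges (Vs i) (Es i) \<union> edges (Vs j) (Es j) \<longrightarrow> e \<in> edges V' De"
      proof (intro ballI impI)
        fix e assume e1: "e \<in> edges V' E" and "e \<in> edges (Vs i) (Es i) \<union> edges (Vs j) (Es j)"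
        then obtain y where "e = {v,y}" "y \<in> V'" "E v y" using starI starJ by blast
        then show "e \<in> edges V' De" using vV by (auto intro!: edge_intro simp: De_def)
      qed
    qed
  qed
qed



definition BLQ :: "('a \<Rightarrow> 'a \<Rightarrow> bool) \<Rightarrow> 'a set \<Rightarrow> bool" where
  "BLQ E Q \<longleftrightarrow> (\<forall>y a b. y \<notin> Q \<longrightarrow> a \<in> Q \<longrightarrow> b \<in> Q \<longrightarrow> E y a \<longrightarrow> E y b \<longrightarrow> a = b)"

lemma AS:
  assumes sg: "sgraph V E" and ci: "cointerval W F" and sub: "\<forall>x\<in>W. \<forall>y\<in>W. F x y \<longrightarrow> E x y"
    and bl: "BLQ E Q" and c: "c \<in> W" "pc \<in> W" "F c pc" "c \<in> Q"
    and pcN: "\<forall>z. E pc z \<longrightarrow> z = c"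
    and cN: "\<forall>z. E c z \<longrightarrow> z \<in> Q \<or> (\<forall>z'. E z z' \<longrightarrow> z' = c)"
  shows "\<exists>x0. \<forall>x\<in>W. \<forall>y\<in>W. F x y \<longrightarrow> x \<notin> {c,pc} \<longrightarrow> y \<notin> {c,pc} \<longrightarrow>
           (x \<in> Q \<and> y \<in> Q) \<or> (x = x0 \<and> x \<in> Q \<and> y \<notin> Q) \<or> (y = x0 \<and> y \<in> Q \<and> x \<notin> Q)"
proof -
  have sym: "\<And>x y. E x y \<Longrightarrow> E y x" using sg sg_sym by metis
  have irr: "\<And>x. \<not> E x x" using sg sg_irr by metis
  have cpc: "c \<noteq> pc" using sub c irr by metis
  have step1: "x \<in> Q \<or> y \<in> Q"
    if xy: "x \<in> W" "y \<in> W" "F x y" "x \<notin> {c,pc}" "y \<notin> {c,pc}" for x y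
  proof (rule ccontr)
    assume nq: "\<not> (x \<in> Q \<or> y \<in> Q)"
    have Exy: "E x y" using sub xy by blast
    have ne: "x \<noteq> y" using Exy irr by metis
    have d: "c \<noteq> x" "c \<noteq> y" "pc \<noteq> x" "pc \<noteq> y" using xy by auto
    show False
    proof (rule ci_2K2[OF ci c(1,2) xy(1,2) c(3) xy(3) cpc ne _ _ _ _ d])
      show "\<not> F c x"
      proof
        assume "F c x" then have "E c x" using sub c xy by blast
        then have "\<forall>z'. E x z' \<longrightarrow> z' = c" using cN nq by blast
        then show False using Exy d by blast
      qed
      show "\<not> F c y"
      proof
        assume "F c y" then have "E c y" using sub c xy by blast
        then have "\<forall>z'. E y z' \<longrightarrow> z' = c" using cN nq by blast
        then show False using sym[OF Exy] d by blast
      qed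
      show "\<not> F pc x" using sub c xy pcN d by blast
      show "\<not> F pc y" using sub c xy pcN d by blast
    qed
  qed
  define Ob where "Ob = {x \<in> W. x \<in> Q \<and> x \<notin> {c,pc} \<and> (\<exists>y\<in>W. y \<notin> Q \<and> y \<notin> {c,pc} \<and> F x y)}"
  have uniq: "x = x'" if h1: "x \<in> Ob" and h2: "x' \<in> Ob" for x x'
  proof (rule ccontr)
    assume nx: "x \<noteq> x'"
    obtain y where y: "x \<in> W" "x \<in> Q" "x \<notin> {c,pc}" "y \<in> W" "y \<notin> Q" "y \<notin> {c,pc}" "F x y"
      using h1 unfolding Ob_def by blast
    obtain y' where y': "x' \<in> W" "x' \<in> Q" "x' \<notin> {c,pc}" "y' \<in> W" "y' \<notin> Q" "y' \<notin> {c,pc}" "F x' y'"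
      using h2 unfolding Ob_def by blast
    have Exy: "E x y" "E x' y'" using sub y y' by blast+
    have n1: "x \<noteq> y" "x' \<noteq> y'" using y y' by auto
    have dd: "pc \<noteq> x" "pc \<noteq> y" "pc \<noteq> x'" "pc \<noteq> y'" "c \<noteq> y" "c \<noteq> y'" "x \<noteq> y'" "x' \<noteq> y"
      using y y' by auto
    show False
    proof (rule ci_oneout[OF ci c(1,2) y(1,4) y'(1,4) c(3) y(7) y'(7) cpc n1 dd])
      show "\<not> F pc x" using sub c y pcN dd by blast
      show "\<not> F pc y" using sub c y pcN dd by blast
      show "\<not> F pc x'" using sub c y' pcN dd by blast
      show "\<not> F pc y'" using sub c y' pcN dd by blast
      show "\<not> F c y"
      proof
        assume "F c y" then have "E c y" using sub c y by blast
        then have "\<forall>z'. E y z' \<longrightarrow> z' = c" using cN y by blast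
        then show False using sym[OF Exy(1)] y by blast
      qed
      show "\<not> F c y'"
      proof
        assume "F c y'" then have "E c y'" using sub c y' by blast
        then have "\<forall>z'. E y' z' \<longrightarrow> z' = c" using cN y' by blast
        then show False using sym[OF Exy(2)] y' by blast
      qed
      show "\<not> F x y'"
      proof
        assume "F x y'" then have "E x y'" using sub y y' by blast
        then have "x = x'" using bl sym[OF Exy(2)] sym y y' unfolding BLQ_def by blast
        then show False using nx by blast
      qed
      show "\<not> F x' y"
      proof
        assume "F x' y" then have "E x' y" using sub y y' by blast
        then have "x = x'" using bl sym[OF Exy(1)] sym y y' unfolding BLQ_def by blast
        then show False using nx by blast
      qed
    qed
  qed
  define x0 where "x0 = (SOME x. x \<in> Ob)"
  have "\<forall>x\<in>W. \<forall>y\<in>W. F x y \<longrightarrow> x \<notin> {c,pc} \<longrightarrow> y \<notin> {c,pc} \<longrightarrow>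
           (x \<in> Q \<and> y \<in> Q) \<or> (x = x0 \<and> x \<in> Q \<and> y \<notin> Q) \<or> (y = x0 \<and> y \<in> Q \<and> x \<notin> Q)"
  proof (intro ballI impI)
    fix x y assume xy: "x \<in> W" "y \<in> W" "F x y" "x \<notin> {c,pc}" "y \<notin> {c,pc}"
    have Exy: "E x y" using sub xy by blast
    have ne: "x \<noteq> y" using Exy irr by metis
    have s1: "x \<in> Q \<or> y \<in> Q" using step1[OF xy] .
    show "(x \<in> Q \<and> y \<in> Q) \<or> (x = x0 \<and> x \<in> Q \<and> y \<notin> Q) \<or> (y = x0 \<and> y \<in> Q \<and> x \<notin> Q)"
    proof (cases "x \<in> Q \<and> y \<in> Q")
      case True then show ?thesis by blast
    next
      case False
      show ?thesis
      proof (cases "x \<in> Q")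
        case True
        then have "x \<in> Ob" using False xy unfolding Ob_def by blast
        then have "x0 \<in> Ob" unfolding x0_def by (rule someI)
        then have "x = x0" using uniq \<open>x \<in> Ob\<close> by blast
        then show ?thesis using True False by blast
      next
        case xQ: False
        then have yQ: "y \<in> Q" using s1 by blast
        have "F y x" using cointerval_sym[OF ci xy(1,2,3) ne] .
        then have "y \<in> Ob" using xQ yQ xy unfolding Ob_def by blast
        then have "x0 \<in> Ob" unfolding x0_def by (rule someI)
        then have "y = x0" using uniq \<open>y \<in> Ob\<close> by blast
        then show ?thesis using xQ yQ by blast
      qed
    qed
  qed
  then show ?thesis by blast
qed



lemma KS:
  assumes sg: "sgraph V E" and VV: "V' \<subseteq> V" and cl: "is_clique Q E" and bl: "BLQ E Q"
    and ab: "a \<in> Q" "a \<in> V'" "b \<in> Q" "b \<in> V'"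
  shows "\<exists>De. cointerval V' De \<and> (\<forall>x\<in>V'. \<forall>y\<in>V'. De x y \<longrightarrow> E x y) \<and>
     (\<forall>x\<in>V'. \<forall>y\<in>V'. E x y \<longrightarrow> ((x \<in> Q \<and> y \<in> Q) \<or> ((x = a \<or> x = b) \<and> y \<notin> Q) \<or> ((y = a \<or> y = b) \<and> x \<notin> Q)) \<longrightarrow> De x y)"
proof -
  have sym: "\<And>x y. E x y \<Longrightarrow> E y x" using sg sg_sym by metis
  have irr: "\<And>x. \<not> E x x" using sg sg_irr by metis
  have fin: "finite (Q \<inter> V')" using VV sg_fin[OF sg] finite_subset by blast
  obtain f :: "'a \<Rightarrow> nat" and n where fn: "f ` (Q \<inter> V') = {i. i < n}" "inj_on f (Q \<inter> V')"
    using finite_imp_inj_to_nat_seg[OF fin] by blast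
  define pos where "pos z = (if z = a then -1 else if z = b then real n + 1 else real (f z))" for z
  define l where "l z = (if z \<in> Q then pos z else if E a z then -1/2 else (-2::real))" for z
  define r where "r z = (if z \<in> Q then pos z else if E a z then real n + 2
                        else if E b z then real n + 1/2 else real n + 2)" for z
  define De where "De x y = (r x < l y \<or> r y < l x)" for x y
  have fr: "z \<in> Q \<Longrightarrow> z \<in> V' \<Longrightarrow> f z < n" for z using fn(1) by blast
  have posA: "pos a = -1" unfolding pos_def by simp
  have posB: "b \<noteq> a \<Longrightarrow> pos b = real n + 1" unfolding pos_def by simp
  have posO: "z \<in> Q \<Longrightarrow> z \<in> V' \<Longrightarrow> z \<noteq> a \<Longrightarrow> z \<noteq> b \<Longrightarrow> 0 \<le> pos z \<and> pos z + 1 \<le> real n" for z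
    using fr[of z] unfolding pos_def by auto
  have posR: "z \<in> Q \<Longrightarrow> z \<in> V' \<Longrightarrow> -1 \<le> pos z \<and> pos z \<le> real n + 1" for z
  proof -
    assume z: "z \<in> Q" "z \<in> V'"
    show ?thesis
    proof (cases "z = a")
      case True then show ?thesis using posA by simp
    next
      case na: False
      show ?thesis
      proof (cases "z = b")
        case True then show ?thesis using posB na by simp
      next
        case False then show ?thesis using posO[OF z na False] by simp
      qed
    qed
  qed
  have posNA: "z \<in> Q \<Longrightarrow> z \<in> V' \<Longrightarrow> z \<noteq> a \<Longrightarrow> 0 \<le> pos z" for z
  proof -
    assume z: "z \<in> Q" "z \<in> V'" "z \<noteq> a"
    show ?thesis
    proof (cases "z = b")
      case True then show ?thesis using posB z by simp
    next
      case False then show ?thesis using posO[OF z False] by simp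
    qed
  qed
  have posNB: "z \<in> Q \<Longrightarrow> z \<in> V' \<Longrightarrow> z \<noteq> b \<Longrightarrow> pos z + 1 \<le> real n" for z
  proof -
    assume z: "z \<in> Q" "z \<in> V'" "z \<noteq> b"
    show ?thesis
    proof (cases "z = a")
      case True then show ?thesis using posA by simp
    next
      case False then show ?thesis using posO[OF z(1,2) False z(3)] by simp
    qed
  qed
  have posInj: "x \<in> Q \<Longrightarrow> x \<in> V' \<Longrightarrow> y \<in> Q \<Longrightarrow> y \<in> V' \<Longrightarrow> x \<noteq> y \<Longrightarrow> pos x \<noteq> pos y" for x y
  proof -
    assume h: "x \<in> Q" "x \<in> V'" "y \<in> Q" "y \<in> V'" "x \<noteq> y"
    show "pos x \<noteq> pos y"
    proof (cases "x = a \<or> x = b \<or> y = a \<or> y = b")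
      case True
      then show ?thesis using h posA posB posNA posNB posR
        by (smt (verit))
    next
      case False
      then have "f x \<noteq> f y" using fn(2) h unfolding inj_on_def by blast
      then show ?thesis using False unfolding pos_def by simp
    qed
  qed
  have lr: "l z \<le> r z" for z unfolding l_def r_def by auto
  have ci: "cointerval V' De" unfolding cointerval_def De_def
    by (rule exI[of _ l], rule exI[of _ r]) (auto simp: lr)
  have sub: "\<forall>x\<in>V'. \<forall>y\<in>V'. De x y \<longrightarrow> E x y"
  proof (intro ballI impI)
    fix x y assume x: "x \<in> V'" and y: "y \<in> V'" and d: "De x y"
    have main: "E x y" if x: "x \<in> V'" and y: "y \<in> V'" and d: "r x < l y \<or> r y < l x" and xQ: "x \<in> Q" for x y
    proof (cases "y \<in> Q")
      case True
      have "x \<noteq> y" using d lr[of x] lr[of y] by auto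
      then show ?thesis using cl xQ True unfolding is_clique_def by blast
    next
      case yQ: False
      show ?thesis
      proof (cases "E a y")
        case True
        have lx: "l x = pos x" "r x = pos x" using xQ unfolding l_def r_def by auto
        have ly: "l y = -1/2" "r y = real n + 2" using yQ True unfolding l_def r_def by auto
        have "x = a"
        proof (rule ccontr)
          assume "x \<noteq> a" then have "0 \<le> pos x" "pos x \<le> real n + 1" using posNA posR xQ x by auto
          then show False using d lx ly by linarith
        qed
        then show ?thesis using True by simp
      next
        case nA: False
        show ?thesis
        proof (cases "E b y")
          case True
          have lx: "l x = pos x" "r x = pos x" using xQ unfolding l_def r_def by auto
          have ly: "l y = -2" "r y = real n + 1/2" using yQ True nA unfolding l_def r_def by auto
          have "x = b"
          proof (rule ccontr)
            assume "x \<noteq> b" then have "pos x + 1 \<le> real n" "-1 \<le> pos x" using posNB posR xQ x by auto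
            then show False using d lx ly by linarith
          qed
          then show ?thesis using True by simp
        next
          case False
          have lx: "l x = pos x" "r x = pos x" using xQ unfolding l_def r_def by auto
          have ly: "l y = -2" "r y = real n + 2" using yQ False nA unfolding l_def r_def by auto
          have "-1 \<le> pos x" "pos x \<le> real n + 1" using posR xQ x by auto
          then show ?thesis using d lx ly by linarith
        qed
      qed
    qed
    show "E x y"
    proof (cases "x \<in> Q")
      case True then show ?thesis using main[OF x y _ True] d unfolding De_def by blast
    next
      case xQ: False
      show ?thesis
      proof (cases "y \<in> Q")
        case True
        have "E y x" using main[OF y x _ True] d unfolding De_def by blast
        then show ?thesis using sym by blast
      next
        case False
        have "l x \<le> -1/2" "r x \<ge> real n + 1/2"
          using xQ unfolding l_def r_def by auto
        moreover have "-1/2 \<ge> l y" "r y \<ge> real n + 1/2" using False unfolding l_def r_def by auto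
        ultimately show ?thesis using d unfolding De_def by linarith
      qed
    qed
  qed
  have cov: "\<forall>x\<in>V'. \<forall>y\<in>V'. E x y \<longrightarrow> ((x \<in> Q \<and> y \<in> Q) \<or> ((x = a \<or> x = b) \<and> y \<notin> Q) \<or> ((y = a \<or> y = b) \<and> x \<notin> Q)) \<longrightarrow> De x y"
  proof (intro ballI impI)
    fix x y assume x: "x \<in> V'" and y: "y \<in> V'" and e: "E x y"
      and c: "(x \<in> Q \<and> y \<in> Q) \<or> ((x = a \<or> x = b) \<and> y \<notin> Q) \<or> ((y = a \<or> y = b) \<and> x \<notin> Q)"
    have one: "r x < l y \<or> r y < l x" if x: "x \<in> V'" and y: "y \<in> V'" and e: "E x y" and xa: "x = a \<or> x = b" and yQ: "y \<notin> Q" for x y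
    proof (cases "E a y")
      case True
      then have "x = a" using bl xa sym[OF e] ab yQ unfolding BLQ_def by (metis sym)
      then show ?thesis using yQ True ab posA unfolding l_def r_def by auto
    next
      case False
      then have xb: "x = b" "b \<noteq> a" using xa e by auto
      then show ?thesis using yQ False e ab posB unfolding l_def r_def by auto
    qed
    show "De x y"
    proof -
      { assume q: "x \<in> Q \<and> y \<in> Q"
        have "x \<noteq> y" using e irr by metis
        then have "pos x \<noteq> pos y" using posInj q x y by blast
        then have ?thesis using q unfolding De_def l_def r_def by auto }
      moreover
      { assume q: "(x = a \<or> x = b) \<and> y \<notin> Q"
        then have ?thesis using one[OF x y e] unfolding De_def by blast }
      moreover
      { assume q: "(y = a \<or> y = b) \<and> x \<notin> Q"
        then have ?thesis using one[OF y x sym[OF e]] unfolding De_def by blast }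
      ultimately show ?thesis using c by blast
    qed
  qed
  show ?thesis using ci sub cov by blast
qed



definition Gd :: "'a set \<Rightarrow> ('a \<Rightarrow> 'a \<Rightarrow> bool) \<Rightarrow> 'a set \<Rightarrow> 'a \<Rightarrow> 'a \<Rightarrow> 'a set \<Rightarrow> bool" where
  "Gd V' E Q a b e \<longleftrightarrow> (\<exists>x y. e = {x,y} \<and> x \<in> V' \<and> y \<in> V' \<and> E x y \<and>
      ((x \<in> Q \<and> y \<in> Q) \<or> ((x = a \<or> x = b) \<and> y \<notin> Q) \<or> ((y = a \<or> y = b) \<and> x \<notin> Q)))"

lemma KS_cover:
  assumes v: "valid V E k Vs Es" and sg: "sgraph V E" and VV: "V' \<subseteq> V"
    and cl: "is_clique Q E" and bl: "BLQ E Q"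
    and ab: "a \<in> Q" "a \<in> V'" "b \<in> Q" "b \<in> V'"
    and i: "i < k" and m: "m < k" "m \<noteq> i"
    and g: "\<forall>e\<in>edges V' E. e \<in> edges (Vs i) (Es i) \<union> edges (Vs m) (Es m) \<longrightarrow> Gd V' E Q a b e"
  shows "cobox V' E \<le> k - 1"
proof -
  obtain De where De: "cointerval V' De" "\<forall>x\<in>V'. \<forall>y\<in>V'. De x y \<longrightarrow> E x y"
     "\<forall>x\<in>V'. \<forall>y\<in>V'. E x y \<longrightarrow> ((x \<in> Q \<and> y \<in> Q) \<or> ((x = a \<or> x = b) \<and> y \<notin> Q) \<or> ((y = a \<or> y = b) \<and> x \<notin> Q)) \<longrightarrow> De x y"
    using KS[OF sg VV cl bl ab] by blast
  show ?thesis
  proof (rule replace_cover[OF v VV i m _ De(2) De(1)])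
    show "V' \<subseteq> V'" by simp
    show "\<forall>e\<in>edges V' E. e \<in> edges (Vs i) (Es i) \<union> edges (Vs m) (Es m) \<longrightarrow> e \<in> edges V' De"
    proof (intro ballI impI)
      fix e assume "e \<in> edges V' E" "e \<in> edges (Vs i) (Es i) \<union> edges (Vs m) (Es m)"
      then have "Gd V' E Q a b e" using g by blast
      then obtain x y where xy: "e = {x,y}" "x \<in> V'" "y \<in> V'" "E x y"
        "(x \<in> Q \<and> y \<in> Q) \<or> ((x = a \<or> x = b) \<and> y \<notin> Q) \<or> ((y = a \<or> y = b) \<and> x \<notin> Q)"
        unfolding Gd_def by blast
      then have "De x y" using De(3) by blast
      then show "e \<in> edges V' De" using xy by (auto intro: edge_intro)
    qed
  qed
qed

lemma quad_case:
  assumes v: "valid V E k Vs Es" and sg: "sgraph V E" and VV: "V' \<subseteq> V" and QV: "Q \<subseteq> V"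
    and cl: "is_clique Q E" and bl: "BLQ E Q"
    and uw: "u \<in> Q" "u \<notin> V'" "w \<in> Q" "w \<notin> V'" "u \<noteq> w"
    and pq: "p \<notin> V'" "q \<notin> V'" "p \<notin> Q" "q \<notin> Q" "E u p" "E w q"
    and pp: "\<forall>z. E p z \<longrightarrow> z = u" and qq: "\<forall>z. E q z \<longrightarrow> z = w"
    and uN: "\<forall>z. E u z \<longrightarrow> z \<in> Q \<or> (\<forall>z'. E z z' \<longrightarrow> z' = u)"
    and wN: "\<forall>z. E w z \<longrightarrow> z \<in> Q \<or> (\<forall>z'. E z z' \<longrightarrow> z' = w)"
    and t: "t \<in> Q" "t \<in> V'" "pt \<in> V'" "pt \<notin> Q" "E t pt"
    and ptN: "\<forall>z. E pt z \<longrightarrow> z = t"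
    and tN: "\<forall>z. E t z \<longrightarrow> z \<in> Q \<or> (\<forall>z'. E z z' \<longrightarrow> z' = t)"
  shows "cobox V' E \<le> k - 1"
proof -
  have sym: "\<And>x y. E x y \<Longrightarrow> E y x" using sg sg_sym by metis
  have irr: "\<And>x. \<not> E x x" using sg sg_irr by metis
  have ne: "u \<noteq> p" "w \<noteq> q" "t \<noteq> pt" using pq t irr by metis+
  have inV: "u \<in> V" "p \<in> V" "w \<in> V" "q \<in> V" "t \<in> V" "pt \<in> V" using sg_in[OF sg] pq t by blast+
  obtain i where i: "i < k" "u \<in> Vs i" "p \<in> Vs i" "Es i u p" using get_graph[OF v pq(5) inV(1,2) ne(1)] by blast
  obtain j where j: "j < k" "w \<in> Vs j" "q \<in> Vs j" "Es j w q" using get_graph[OF v pq(6) inV(3,4) ne(2)] by blast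
  obtain l where l: "l < k" "t \<in> Vs l" "pt \<in> Vs l" "Es l t pt" using get_graph[OF v t(5) inV(5,6) ne(3)] by blast
  have civ: "cointerval (Vs g) (Es g)" "\<forall>x\<in>Vs g. \<forall>y\<in>Vs g. Es g x y \<longrightarrow> E x y" if "g < k" for g
    using v that unfolding valid_def by auto
  obtain xi where ASi: "\<forall>x\<in>Vs i. \<forall>y\<in>Vs i. Es i x y \<longrightarrow> x \<notin> {u,p} \<longrightarrow> y \<notin> {u,p} \<longrightarrow>
           (x \<in> Q \<and> y \<in> Q) \<or> (x = xi \<and> x \<in> Q \<and> y \<notin> Q) \<or> (y = xi \<and> y \<in> Q \<and> x \<notin> Q)"
    using AS[OF sg civ[OF i(1)] bl i(2,3,4) uw(1) pp uN] by blast
  obtain xj where ASj: "\<forall>x\<in>Vs j. \<forall>y\<in>Vs j. Es j x y \<longrightarrow> x \<notin> {w,q} \<longrightarrow> y \<notin> {w,q} \<longrightarrow>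
           (x \<in> Q \<and> y \<in> Q) \<or> (x = xj \<and> x \<in> Q \<and> y \<notin> Q) \<or> (y = xj \<and> y \<in> Q \<and> x \<notin> Q)"
    using AS[OF sg civ[OF j(1)] bl j(2,3,4) uw(3) qq wN] by blast
  obtain xl where ASl: "\<forall>x\<in>Vs l. \<forall>y\<in>Vs l. Es l x y \<longrightarrow> x \<notin> {t,pt} \<longrightarrow> y \<notin> {t,pt} \<longrightarrow>
           (x \<in> Q \<and> y \<in> Q) \<or> (x = xl \<and> x \<in> Q \<and> y \<notin> Q) \<or> (y = xl \<and> y \<in> Q \<and> x \<notin> Q)"
    using AS[OF sg civ[OF l(1)] bl l(2,3,4) t(1) ptN tN] by blast
  define ai where "ai = (if xi \<in> Q \<and> xi \<in> V' then xi else t)"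
  define aj where "aj = (if xj \<in> Q \<and> xj \<in> V' then xj else t)"
  define al where "al = (if xl \<in> Q \<and> xl \<in> V' then xl else t)"
  have aQ: "ai \<in> Q" "ai \<in> V'" "aj \<in> Q" "aj \<in> V'" "al \<in> Q" "al \<in> V'"
    unfolding ai_def aj_def al_def using t by auto
  have Gi: "Gd V' E Q ai b e" if e1: "e \<in> edges V' E" and e2: "e \<in> edges (Vs i) (Es i)" for e b
  proof -
    obtain x y where xy: "e = {x,y}" "x \<in> V'" "y \<in> V'" "x \<in> Vs i" "y \<in> Vs i" "Es i x y" "E x y" "x \<noteq> y"
      using edge_common[OF v sg i(1) e1 e2] by blast
    have "x \<notin> {u,p}" "y \<notin> {u,p}" using xy uw pq by auto
    then have "(x \<in> Q \<and> y \<in> Q) \<or> (x = xi \<and> x \<in> Q \<and> y \<notin> Q) \<or> (y = xi \<and> y \<in> Q \<and> x \<notin> Q)"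
      using ASi xy by blast
    then have "(x \<in> Q \<and> y \<in> Q) \<or> (x = ai \<and> y \<notin> Q) \<or> (y = ai \<and> x \<notin> Q)"
      unfolding ai_def using xy by auto
    then show ?thesis unfolding Gd_def using xy by blast
  qed
  have Gj: "Gd V' E Q b aj e" if e1: "e \<in> edges V' E" and e2: "e \<in> edges (Vs j) (Es j)" for e b
  proof -
    obtain x y where xy: "e = {x,y}" "x \<in> V'" "y \<in> V'" "x \<in> Vs j" "y \<in> Vs j" "Es j x y" "E x y" "x \<noteq> y"
      using edge_common[OF v sg j(1) e1 e2] by blast
    have "x \<notin> {w,q}" "y \<notin> {w,q}" using xy uw pq by auto
    then have "(x \<in> Q \<and> y \<in> Q) \<or> (x = xj \<and> x \<in> Q \<and> y \<notin> Q) \<or> (y = xj \<and> y \<in> Q \<and> x \<notin> Q)"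
      using ASj xy by blast
    then have "(x \<in> Q \<and> y \<in> Q) \<or> (x = aj \<and> y \<notin> Q) \<or> (y = aj \<and> x \<notin> Q)"
      unfolding aj_def using xy by auto
    then show ?thesis unfolding Gd_def using xy by blast
  qed
  show ?thesis
  proof (cases "i = j")
    case False
    show ?thesis
    proof (rule KS_cover[OF v sg VV cl bl aQ(1,2,3,4) i(1) j(1) False[symmetric]])
      show "\<forall>e\<in>edges V' E. e \<in> edges (Vs i) (Es i) \<union> edges (Vs j) (Es j) \<longrightarrow> Gd V' E Q ai aj e"
        using Gi Gj by blast
    qed
  next
    case True
    have ci: "cointerval (Vs i) (Es i)" and sub: "\<forall>x\<in>Vs i. \<forall>y\<in>Vs i. Es i x y \<longrightarrow> E x y"
      using civ[OF i(1)] by auto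
    have jj: "w \<in> Vs i" "q \<in> Vs i" "Es i w q" using j True by auto
    have noout: False if h: "x \<in> Vs i" "y \<in> Vs i" "x \<in> V'" "y \<in> V'" "Es i x y" "x \<in> Q" "y \<notin> Q" for x y
    proof -
      have Exy: "E x y" using sub h by blast
      have xy: "x \<noteq> y" using h by blast
      have pqd: "p \<noteq> q"
      proof
        assume "p = q" then have "E p w" using sym[OF pq(6)] by simp
        then show False using pp uw by blast
      qed
      have dd: "p \<noteq> w" "p \<noteq> q" "p \<noteq> x" "p \<noteq> y" "q \<noteq> u" "q \<noteq> x" "q \<noteq> y" "u \<noteq> y" "w \<noteq> y"
        using pq uw h pqd by auto
      have nE: "\<not> E p w" "\<not> E p q" "\<not> E p x" "\<not> E p y" "\<not> E q u" "\<not> E q x" "\<not> E q y"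
        using pp qq uw pq h by auto
      have nuy: "\<not> E u y"
      proof
        assume "E u y"
        then have "u = x" using bl sym[OF Exy] sym uw h unfolding BLQ_def by blast
        then show False using uw h by blast
      qed
      have nwy: "\<not> E w y"
      proof
        assume "E w y"
        then have "w = x" using bl sym[OF Exy] sym uw h unfolding BLQ_def by blast
        then show False using uw h by blast
      qed
      show False
      proof (rule ci_six[OF ci i(2,3) jj(1,2) h(1,2) i(4) jj(3) h(5) ne(1,2) xy dd])
        show "\<not> Es i p w" "\<not> Es i p q" "\<not> Es i p x" "\<not> Es i p y" "\<not> Es i q u" "\<not> Es i q x" "\<not> Es i q y"
          using sub nE i jj h by blast+
        show "\<not> Es i u y" "\<not> Es i w y" using sub nuy nwy i jj h by blast+
      qed
    qed
    have GiQ: "Gd V' E Q t al e" if e1: "e \<in> edges V' E" and e2: "e \<in> edges (Vs i) (Es i)" for e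
    proof -
      obtain x y where xy: "e = {x,y}" "x \<in> V'" "y \<in> V'" "x \<in> Vs i" "y \<in> Vs i" "Es i x y" "E x y" "x \<noteq> y"
        using edge_common[OF v sg i(1) e1 e2] by blast
      have "x \<notin> {u,p}" "y \<notin> {u,p}" using xy uw pq by auto
      then have c3: "(x \<in> Q \<and> y \<in> Q) \<or> (x = xi \<and> x \<in> Q \<and> y \<notin> Q) \<or> (y = xi \<and> y \<in> Q \<and> x \<notin> Q)"
        using ASi xy by blast
      have "x \<in> Q \<and> y \<in> Q"
      proof (rule ccontr)
        assume nb: "\<not> (x \<in> Q \<and> y \<in> Q)"
        show False
        proof (cases "x \<in> Q")
          case True
          then show False using noout[OF xy(4,5,2,3,6)] nb by blast
        next
          case False
          then have "y \<in> Q" using c3 by blast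
          moreover have "Es i y x" using cointerval_sym[OF ci xy(4,5,6,8)] .
          ultimately show False using noout[OF xy(5,4,3,2)] False by blast
        qed
      qed
      then show ?thesis unfolding Gd_def using xy by blast
    qed
    have li: "l \<noteq> i"
    proof
      assume "l = i"
      then show False using noout[of t pt] l t by blast
    qed
    have Gl: "Gd V' E Q t al e" if e1: "e \<in> edges V' E" and e2: "e \<in> edges (Vs l) (Es l)" for e
    proof -
      obtain x y where xy: "e = {x,y}" "x \<in> V'" "y \<in> V'" "x \<in> Vs l" "y \<in> Vs l" "Es l x y" "E x y" "x \<noteq> y"
        using edge_common[OF v sg l(1) e1 e2] by blast
      have "(x \<in> Q \<and> y \<in> Q) \<or> ((x = t \<or> x = al) \<and> y \<notin> Q) \<or> ((y = t \<or> y = al) \<and> x \<notin> Q)"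
      proof (cases "x \<in> {t,pt} \<or> y \<in> {t,pt}")
        case True
        have "x = t \<or> y = t"
        proof -
          { assume "x = pt" then have "y = t" using ptN xy by blast }
          moreover
          { assume "y = pt" then have "x = t" using ptN sym[OF xy(7)] by blast }
          ultimately show ?thesis using True by blast
        qed
        then show ?thesis using t by blast
      next
        case False
        then have "(x \<in> Q \<and> y \<in> Q) \<or> (x = xl \<and> x \<in> Q \<and> y \<notin> Q) \<or> (y = xl \<and> y \<in> Q \<and> x \<notin> Q)"
          using ASl xy by blast
        then show ?thesis unfolding al_def using xy by auto
      qed
      then show ?thesis unfolding Gd_def using xy by blast
    qed
    show ?thesis
    proof (rule KS_cover[OF v sg VV cl bl t(1,2) aQ(5,6) i(1) l(1) li])
      show "\<forall>e\<in>edges V' E. e \<in> edges (Vs i) (Es i) \<union> edges (Vs l) (Es l) \<longrightarrow> Gd V' E Q t al e"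
        using GiQ Gl by blast
    qed
  qed
qed



lemma nbhd_iff: "sgraph V E \<Longrightarrow> z \<in> nbhd V E u \<longleftrightarrow> E u z"
proof -
  assume sg: "sgraph V E"
  show ?thesis
  proof
    assume "z \<in> nbhd V E u" then show "E u z" unfolding nbhd_def adj_in_def by blast
  next
    assume e: "E u z" then have "u \<in> V" "z \<in> V" using sg_in[OF sg e] by auto
    then show "z \<in> nbhd V E u" using e unfolding nbhd_def adj_in_def by blast
  qed
qed

lemma pend_char:
  assumes sg: "sgraph V E" and z: "z \<in> pendant_nbrs V E u"
  shows "E u z \<and> (\<forall>z'. E z z' \<longrightarrow> z' = u)"
proof -
  have Euz: "E u z" using z nbhd_iff[OF sg] unfolding pendant_nbrs_def by blast
  have "card (nbhd V E z) = 1" using z unfolding pendant_nbrs_def degree_def by blast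
  then obtain c where c: "nbhd V E z = {c}" using card_1_singletonE by blast
  have "u \<in> nbhd V E z" using nbhd_iff[OF sg] sg_sym[OF sg Euz] by blast
  then have cu: "c = u" using c by simp
  have "\<forall>z'. E z z' \<longrightarrow> z' = u"
  proof (intro allI impI)
    fix z' assume "E z z'" then have "z' \<in> nbhd V E z" using nbhd_iff[OF sg] by blast
    then show "z' = u" using c cu by blast
  qed
  then show ?thesis using Euz by blast
qed

lemma pend_intro:
  assumes sg: "sgraph V E" and e: "E u z" and p: "\<forall>z'. E z z' \<longrightarrow> z' = u"
  shows "z \<in> pendant_nbrs V E u"
proof -
  have "nbhd V E z = {u}"
  proof
    show "nbhd V E z \<subseteq> {u}" using p nbhd_iff[OF sg] by blast
    show "{u} \<subseteq> nbhd V E z" using nbhd_iff[OF sg] sg_sym[OF sg e] by blast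
  qed
  then have "degree V E z = 1" unfolding degree_def by simp
  moreover have "z \<in> nbhd V E u" using nbhd_iff[OF sg] e by blast
  ultimately show ?thesis unfolding pendant_nbrs_def by blast
qed

lemma blq:
  assumes sg: "sgraph V E" and blk: "is_block V E Q" and cl: "is_clique Q E"
  shows "BLQ E Q"
  unfolding BLQ_def
proof (intro allI impI)
  fix y a b assume h: "y \<notin> Q" "a \<in> Q" "b \<in> Q" "E y a" "E y b"
  show "a = b"
  proof (rule ccontr)
    assume "a \<noteq> b"
    moreover have "y \<in> V" using sg_in[OF sg h(4)] by blast
    ultimately show False using BL[OF sg blk cl _ h(1,2,3) _ h(4,5)] by blast
  qed
qed

lemma card_ge2_other:
  assumes "finite C" "card C \<ge> 2" "v \<in> C"
  shows "\<exists>u\<in>C. u \<noteq> v"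
proof (rule ccontr)
  assume "\<not> (\<exists>u\<in>C. u \<noteq> v)"
  then have "C = {v}" using assms(3) by blast
  then show False using assms(2) by simp
qed



theorem lemma12:
  fixes V :: "'a set" and E :: "'a \<Rightarrow> 'a \<Rightarrow> bool" and R :: "'a set"
  assumes "sgraph V E"
    and "graph_connected V E"
    and "block_graph V E"
    and "edges V E \<noteq> {}"
    and "admissible_R V E R"
  shows "cobox (V - R) E \<le> cobox V E - 1"
proof -
  have sg: "sgraph V E" and cV: "graph_connected V E" and bg: "block_graph V E"
    and adm: "admissible_R V E R" using assms by auto
  have sym: "\<And>x y. E x y \<Longrightarrow> E y x" using sg sg_sym by metis
  have irr: "\<And>x. \<not> E x x" using sg sg_irr by metis
  have fin: "finite V" using sg sg_fin by blast
  obtain Vs Es where v: "valid V E (cobox V E) Vs Es" using cobox_cover[OF sg] by blast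
  have VV: "V - R \<subseteq> V" by blast
  show ?thesis
  proof (cases "is_clique V E \<or> is_star V E")
    case True
    then have "R = V" using adm unfolding admissible_R_def by simp
    then have "edges (V - R) E = {}" unfolding edges_def adj_in_def by auto
    then have "cobox (V - R) E = 0" by (rule cobox_empty)
    then show ?thesis by simp
  next
    case nA: False
    show ?thesis
    proof (cases "\<exists>Q. leaf_block V E Q \<and> card Q \<ge> 3")
      case True
      then obtain Q where Q: "leaf_block V E Q" "card Q \<ge> 3" "R = Q"
        using adm unfolding admissible_R_def if_not_P[OF nA] if_P[OF True] by blast
      have blk: "is_block V E Q" and c1: "card (cutvs_in V E Q) = 1" using Q unfolding leaf_block_def by auto
      have cl: "is_clique Q E" using bg blk unfolding block_graph_def by blast
      have QV: "Q \<subseteq> V" using blk unfolding is_block_def by blast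
      have finQ: "finite Q" using QV fin finite_subset by blast
      have CQ: "cutvs_in V E Q \<subseteq> Q" unfolding cutvs_in_def by blast
      have "card (Q - cutvs_in V E Q) = card Q - card (cutvs_in V E Q)"
        using card_Diff_subset[OF finite_subset[OF CQ finQ] CQ] .
      then have "card (Q - cutvs_in V E Q) \<ge> 2" using Q(2) c1 by simp
      then have ne2: "Q - cutvs_in V E Q \<noteq> {}" by (metis card.empty not_numeral_le_zero)
      then obtain a where a: "a \<in> Q - cutvs_in V E Q" by blast
      have finQC: "finite (Q - cutvs_in V E Q)" using finQ by simp
      obtain b where b: "b \<in> Q - cutvs_in V E Q" "b \<noteq> a"
        using card_ge2_other[OF finQC \<open>card (Q - cutvs_in V E Q) \<ge> 2\<close> a] by blast
      have ab: "a \<in> Q - cutvs_in V E Q" "b \<in> Q - cutvs_in V E Q" "a \<noteq> b" using a b by auto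
      have Eab: "E a b" using cl ab unfolding is_clique_def by blast
      have nbr: "\<not> E c z" if c: "c \<in> Q - cutvs_in V E Q" and d: "d \<in> Q" "d \<noteq> c" and z: "z \<in> V - Q" for c d z
      proof
        assume "E c z"
        then have "cut_vertex V E c" using L[OF sg cV blk cl _ d(1,2) _ _] c z by blast
        then show False using c unfolding cutvs_in_def by blast
      qed
      have "cobox (V - Q) E \<le> cobox V E - 1"
      proof (rule drop_by_edge[OF v sg _ Eab])
        show "V - Q \<subseteq> V" by blast
        show "a \<notin> V - Q" "b \<notin> V - Q" using ab by auto
        show "\<forall>z\<in>V - Q. \<not> E a z \<and> \<not> E b z"
          using nbr[of a b] nbr[of b a] ab by blast
      qed
      then show ?thesis using Q(3) by simp
    next
      case nB: False
      obtain Q v where NL: "near_leaf_block V E Q"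
        and vc: "(if (\<exists>c. anchor V E Q c) then anchor V E Q v else v \<in> cutvs_in V E Q)"
        and rc: "(if card (cutvs_in V E Q) = 2
             then (\<exists>u. u \<in> cutvs_in V E Q \<and> u \<noteq> v \<and> R = big_ant_vertices V E Q u u)
             else (\<exists>u w. u \<noteq> w \<and> u \<in> cutvs_in V E Q - {v} \<and> w \<in> cutvs_in V E Q - {v} \<and>
                     R = (if card (cutvs_in V E Q) = 3
                          then big_ant_vertices V E Q u w - {v}
                          else pendant_nbrs V E u \<union> pendant_nbrs V E w \<union> {u, w})))"
        using adm unfolding admissible_R_def if_not_P[OF nA] if_not_P[OF nB] by blast
      have blk: "is_block V E Q" and C2: "card (cutvs_in V E Q) \<ge> 2"
        using NL unfolding near_leaf_block_def internal_block_def by auto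
      have cl: "is_clique Q E" using bg blk unfolding block_graph_def by blast
      have QV: "Q \<subseteq> V" using blk unfolding is_block_def by blast
      have finQ: "finite Q" using QV fin finite_subset by blast
      have CQ: "cutvs_in V E Q \<subseteq> Q" unfolding cutvs_in_def by blast
      have finC: "finite (cutvs_in V E Q)" using finite_subset[OF CQ finQ] .
      have vQ: "v \<in> Q"
      proof (cases "\<exists>c. anchor V E Q c")
        case True
        then have "anchor V E Q v" using vc by simp
        then obtain B where "block_neighbours V E Q B \<and> internal_block V E B" "B \<inter> Q = {v}"
          unfolding anchor_def by blast
        then show ?thesis by blast
      next
        case False
        then have "v \<in> cutvs_in V E Q" using vc by simp
        then show ?thesis using CQ by blast
      qed
      have nln1: "\<forall>z'. E z z' \<longrightarrow> z' = u"
        if u: "u \<in> cutvs_in V E Q" "u \<noteq> v" and z: "E u z" "z \<notin> Q" for u z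
      proof -
        obtain B where B: "is_block V E B" "u \<in> B" "z \<in> B" using block_exists[OF sg z(1)] by blast
        have uQ: "u \<in> Q" using u CQ by blast
        have BQ: "B \<noteq> Q" using B z by blast
        have nb: "block_neighbours V E Q B" unfolding block_neighbours_def using blk B BQ uQ by blast
        have cutu: "cut_vertex V E u" using u unfolding cutvs_in_def by blast
        have BV: "B \<subseteq> V" using B unfolding is_block_def by blast
        have finB: "finite B" using BV fin finite_subset by blast
        have finCB: "finite (cutvs_in V E B)" using finB unfolding cutvs_in_def by simp
        have uCB: "u \<in> cutvs_in V E B" using B cutu unfolding cutvs_in_def by blast
        have ge1: "card (cutvs_in V E B) \<ge> 1" using uCB finCB card_0_eq by fastforce
        have c1: "card (cutvs_in V E B) = 1"
        proof (rule ccontr)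
          assume "card (cutvs_in V E B) \<noteq> 1"
          then have intB: "internal_block V E B" using ge1 B unfolding internal_block_def by simp
          have nl2: "(\<forall>B. block_neighbours V E Q B \<longrightarrow> leaf_block V E B) \<or>
            (\<exists>c. \<forall>B. block_neighbours V E Q B \<and> internal_block V E B \<longrightarrow> B \<inter> Q = {c})"
            using NL unfolding near_leaf_block_def by blast
          show False
          proof (cases "\<forall>B. block_neighbours V E Q B \<longrightarrow> leaf_block V E B")
            case True
            then have "leaf_block V E B" using nb by blast
            then show False using \<open>card (cutvs_in V E B) \<noteq> 1\<close> unfolding leaf_block_def by blast
          next
            case False
            then obtain c where c: "\<forall>B. block_neighbours V E Q B \<and> internal_block V E B \<longrightarrow> B \<inter> Q = {c}"
              using nl2 by blast
            have "anchor V E Q c" unfolding anchor_def using NL nb intB c by blast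
            then have ex: "\<exists>c. anchor V E Q c" by blast
            have "anchor V E Q v" using vc unfolding if_P[OF ex] .
            then have "B \<inter> Q = {v}" using nb intB unfolding anchor_def by blast
            then show False using B(2) uQ u(2) by blast
          qed
        qed
        have "\<not> card B \<ge> 3" using nB B c1 unfolding leaf_block_def by blast
        moreover have uz: "u \<noteq> z" using z irr by metis
        moreover have "{u,z} \<subseteq> B" using B by blast
        ultimately have Beq: "B = {u,z}"
        proof -
          assume n3: "\<not> card B \<ge> 3" and uz: "u \<noteq> z" and sub: "{u,z} \<subseteq> B"
          have "card {u,z} = 2" using uz by simp
          moreover have "card {u,z} \<le> card B" using card_mono[OF finB sub] .
          ultimately have "card {u,z} = card B" using n3 by linarith
          then show "B = {u,z}" using card_subset_eq[OF finB sub] by simp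
        qed
        show ?thesis
        proof (intro allI impI)
          fix z' assume zz: "E z z'"
          show "z' = u"
          proof (rule ccontr)
            assume nz: "z' \<noteq> u"
            have "z' \<noteq> z" using zz irr by metis
            then have z'B: "z' \<notin> B" using Beq nz by blast
            have z'V: "z' \<in> V" using sg_in[OF sg zz] by blast
            have clB: "is_clique B E" using bg B unfolding block_graph_def by blast
            have "cut_vertex V E z" using L[OF sg cV B(1) clB B(3) B(2) uz z'V z'B zz] .
            then have "z \<in> cutvs_in V E B" using B unfolding cutvs_in_def by blast
            then have "{u,z} \<subseteq> cutvs_in V E B" using uCB by blast
            then have "card {u,z} \<le> card (cutvs_in V E B)" using card_mono finCB by blast
            then show False using c1 uz by simp
          qed
        qed
      qed
      have nln2: "\<exists>p. E u p \<and> p \<notin> Q \<and> (\<forall>z'. E p z' \<longrightarrow> z' = u)"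
        if u: "u \<in> cutvs_in V E Q" "u \<noteq> v" for u
      proof -
        have uQ: "u \<in> Q" using u CQ by blast
        have cutu: "cut_vertex V E u" using u unfolding cutvs_in_def by blast
        obtain z where z: "z \<in> V - Q" "E u z" using L2[OF sg cV cl QV uQ vQ u(2)[symmetric] cutu] by blast
        then show ?thesis using nln1[OF u z(2)] by blast
      qed
      have uN: "\<forall>z. E u z \<longrightarrow> z \<in> Q \<or> (\<forall>z'. E z z' \<longrightarrow> z' = u)"
        if u: "u \<in> cutvs_in V E Q" "u \<noteq> v" for u
        using nln1[OF u] by blast
      show ?thesis
      proof (cases "card (cutvs_in V E Q) = 2")
        case True
        then obtain u where u: "u \<in> cutvs_in V E Q" "u \<noteq> v" "R = big_ant_vertices V E Q u u"
          using rc by auto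
        obtain p where p: "E u p" "p \<notin> Q" "\<forall>z'. E p z' \<longrightarrow> z' = u" using nln2[OF u(1,2)] by blast
        have uQ: "u \<in> Q" using u CQ by blast
        have Rd: "R = Q \<union> nbhd V E u" using u(3) unfolding big_ant_vertices_def by simp
        show ?thesis
        proof (rule drop_by_edge[OF v sg VV p(1)])
          show "u \<notin> V - R" using Rd uQ by blast
          show "p \<notin> V - R" using Rd p(1) nbhd_iff[OF sg] by blast
          show "\<forall>z\<in>V - R. \<not> E u z \<and> \<not> E p z"
          proof
            fix z assume z: "z \<in> V - R"
            have "\<not> E u z" using z Rd nbhd_iff[OF sg] by blast
            moreover have "\<not> E p z" using z Rd p(3) uQ by blast
            ultimately show "\<not> E u z \<and> \<not> E p z" by blast
          qed
        qed
      next
        case n2: False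
        obtain u w where uw: "u \<noteq> w" "u \<in> cutvs_in V E Q - {v}" "w \<in> cutvs_in V E Q - {v}"
          "R = (if card (cutvs_in V E Q) = 3 then big_ant_vertices V E Q u w - {v}
                else pendant_nbrs V E u \<union> pendant_nbrs V E w \<union> {u, w})"
          using rc n2 by auto
        have uv: "u \<in> cutvs_in V E Q" "u \<noteq> v" "w \<in> cutvs_in V E Q" "w \<noteq> v" using uw by auto
        obtain p where p: "E u p" "p \<notin> Q" "\<forall>z'. E p z' \<longrightarrow> z' = u" using nln2[OF uv(1,2)] by blast
        obtain q where q: "E w q" "q \<notin> Q" "\<forall>z'. E q z' \<longrightarrow> z' = w" using nln2[OF uv(3,4)] by blast
        have uQ: "u \<in> Q" "w \<in> Q" using uv CQ by auto
        have Euw: "E u w" "E u v" "E w v" using cl uQ vQ uw(1) uv unfolding is_clique_def by auto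
        have pq: "p \<noteq> q"
        proof
          assume "p = q" then have "E p w" using sym[OF q(1)] by simp
          then show False using p(3) uw(1) by blast
        qed
        have pw: "p \<noteq> w" "q \<noteq> u" using p q uQ by auto
        show ?thesis
        proof (cases "card (cutvs_in V E Q) = 3")
          case True
          then have Rd: "R = Q \<union> nbhd V E u \<union> nbhd V E w - {v}"
            using uw(4) unfolding big_ant_vertices_def by simp
          show ?thesis
          proof (rule star_case[OF v sg VV _ _ _ _ _ p(1) q(1) Euw p(3) q(3) _ uw(1) pq pw])
            show "v \<in> V - R" using Rd vQ QV by blast
            show "u \<notin> V - R" "w \<notin> V - R" using Rd uQ uv by auto
            show "p \<notin> V - R" using Rd p(1,2) vQ nbhd_iff[OF sg] by blast
            show "q \<notin> V - R" using Rd q(1,2) vQ nbhd_iff[OF sg] by blast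
            show "\<forall>z\<in>V - R. z \<noteq> v \<longrightarrow> \<not> E u z \<and> \<not> E w z"
              using Rd nbhd_iff[OF sg] by blast
          qed
        next
          case n3: False
          then have Rd: "R = pendant_nbrs V E u \<union> pendant_nbrs V E w \<union> {u, w}" using uw(4) by simp
          have c4: "card (cutvs_in V E Q) \<ge> 4" using C2 n2 n3 by linarith
          have "\<not> cutvs_in V E Q \<subseteq> {u,w,v}"
          proof
            assume "cutvs_in V E Q \<subseteq> {u,w,v}"
            then have "card (cutvs_in V E Q) \<le> card {u,w,v}" using card_mono[of "{u,w,v}"] by simp
            moreover have "card {u,w,v} \<le> 3" by (simp add: card_insert_if)
            ultimately show False using c4 by linarith
          qed
          then obtain t where t: "t \<in> cutvs_in V E Q" "t \<noteq> u" "t \<noteq> w" "t \<noteq> v" by blast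
          obtain pt where pt: "E t pt" "pt \<notin> Q" "\<forall>z'. E pt z' \<longrightarrow> z' = t" using nln2[OF t(1,4)] by blast
          have tQ: "t \<in> Q" using t CQ by blast
          have Etu: "E t u" "E t w" using cl tQ uQ t unfolding is_clique_def by auto
          have pR: "p \<in> R" "q \<in> R" using Rd pend_intro[OF sg p(1) p(3)] pend_intro[OF sg q(1) q(3)] by auto
          have tR: "t \<notin> R"
          proof
            assume "t \<in> R"
            then have "t \<in> pendant_nbrs V E u \<or> t \<in> pendant_nbrs V E w" using Rd t by blast
            then show False using pend_char[OF sg, of t u] pend_char[OF sg, of t w] Etu uw(1) by blast
          qed
          have ptR: "pt \<notin> R"
          proof
            assume "pt \<in> R"
            moreover have "pt \<noteq> u" "pt \<noteq> w" using pt uQ by auto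
            ultimately have "pt \<in> pendant_nbrs V E u \<or> pt \<in> pendant_nbrs V E w" using Rd by blast
            then have "E u pt \<or> E w pt" using pend_char[OF sg, of pt u] pend_char[OF sg, of pt w] by blast
            then show False using pt(3) sym t by blast
          qed
          have tV: "t \<in> V" "pt \<in> V" using tQ QV sg_in[OF sg pt(1)] by auto
          show ?thesis
          proof (rule quad_case[OF v sg VV QV cl blq[OF sg blk cl] uQ(1) _ uQ(2) _ uw(1) _ _ p(2) q(2) p(1) q(1)
                p(3) q(3) uN[OF uv(1,2)] uN[OF uv(3,4)] tQ _ _ pt(2) pt(1) pt(3) uN[OF t(1,4)]])
            show "u \<notin> V - R" "w \<notin> V - R" using Rd by auto
            show "p \<notin> V - R" "q \<notin> V - R" using pR by auto
            show "t \<in> V - R" "pt \<in> V - R" using tR ptR tV by auto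
          qed
        qed
      qed
    qed
  qed
qed


end
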